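(* Let $n,m,k_1,\ldots,k_r\ge 0$ be integers and let $u_1,\ldots,u_r\in F$ be evaluations at $(C_1,C_2)$ of left normed commutators of the form $[t_1,t_2,t_{j_3},\ldots,t_{j_l}]$ ($j_s\in\{1,2\}$, degree $l\ge 2$). Let $f=C_1^nC_2^mu_1^{k_1}\cdots u_r^{k_r}\in F$. Then $f$ is central in $F$ if and only if $k_1+\cdots+k_r\ge 2$, or else $m=n=k_1=\cdots=k_r=0$.
   Context: $K$ is an infinite field of characteristic different from 2. Let $X=\{x_1,x_2,x_1',x_2'\}$ and $Y=\{y_1,y_2,y_1',y_2'\}$, and let $K[X;Y]\cong K[X]\otimes_K E(Y)$ be the free supercommutative algebra: the $x$'s are even commuting variables, the $y$'s are odd pairwise anticommuting variables, and $E(Y)$ is the Grassmann algebra on the vector space with basis $Y$. Put $C_1=\begin{pmatrix} x_1&y_1\\ y_1'&x_1'\end{pmatrix}$, $C_2=\begin{pmatrix} x_2&y_2\\ y_2'&x_2'\end{pmatrix}$, and let $F=K[C_1,C_2]$ be the unital $K$-subalgebra of $M_2(K[X;Y])$ generated by $C_1,C_2$. Commutators are $[a,b]=ab-ba$, left normed: $[a_1,\ldots,a_k]=[[a_1,\ldots,a_{k-1}],a_k]$; $t_1,t_2$ are free noncommuting variables. *)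

theory Defs
  imports Main
begin

text \<open>The free supercommutative algebra K[X;Y] = K[X] (x) E(Y).
  Even variables x_1, x_2, x_1', x_2' have indices 0, 1, 2, 3;
  odd variables y_1, y_2, y_1', y_2' have indices 0, 1, 2, 3.
  A monomial x^a y_S is a pair (a, S), with a the exponent vector and S the
  set of odd variables occurring (written in increasing index order).
  An element is its coefficient function.\<close>

type_synonym 'k sc = "(nat \<Rightarrow> nat) \<times> nat set \<Rightarrow> 'k"

definition sc_add :: "'k::comm_ring_1 sc \<Rightarrow> 'k sc \<Rightarrow> 'k sc" where
  "sc_add f g = (\<lambda>mo. f mo + g mo)"

definition sc_smult :: "'k::comm_ring_1 \<Rightarrow> 'k sc \<Rightarrow> 'k sc" where
  "sc_smult c f = (\<lambda>mo. c * f mo)"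

text \<open>Sign of y_T * y_U = sign T U * y_(T union U) for disjoint T, U.\<close>
definition gsign :: "nat set \<Rightarrow> nat set \<Rightarrow> 'k::comm_ring_1" where
  "gsign T U = (- 1) ^ card {(t, u). t \<in> T \<and> u \<in> U \<and> u < t}"

definition sc_mult :: "'k::comm_ring_1 sc \<Rightarrow> 'k sc \<Rightarrow> 'k sc" where
  "sc_mult f g = (\<lambda>(a, S). \<Sum>(b, T) \<in> {(b, T). b \<le> a \<and> T \<subseteq> S}.
       gsign T (S - T) * f (b, T) * g (\<lambda>i. a i - b i, S - T))"

definition sc_one :: "'k::comm_ring_1 sc" where
  "sc_one = (\<lambda>mo. if mo = (\<lambda>_. 0, {}) then 1 else 0)"

definition xv :: "nat \<Rightarrow> 'k::comm_ring_1 sc" where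
  "xv i = (\<lambda>mo. if mo = ((\<lambda>_. 0)(i := 1), {}) then 1 else 0)"

definition yv :: "nat \<Rightarrow> 'k::comm_ring_1 sc" where
  "yv i = (\<lambda>mo. if mo = (\<lambda>_. 0, {i}) then 1 else 0)"

text \<open>2x2 matrices over K[X;Y]; row/column index False = 1, True = 2.\<close>
type_synonym 'k mat2 = "bool \<Rightarrow> bool \<Rightarrow> 'k sc"

definition madd :: "'k::comm_ring_1 mat2 \<Rightarrow> 'k mat2 \<Rightarrow> 'k mat2" where
  "madd A B = (\<lambda>i j. sc_add (A i j) (B i j))"

definition msmult :: "'k::comm_ring_1 \<Rightarrow> 'k mat2 \<Rightarrow> 'k mat2" where
  "msmult c A = (\<lambda>i j. sc_smult c (A i j))"

definition mmult :: "'k::comm_ring_1 mat2 \<Rightarrow> 'k mat2 \<Rightarrow> 'k mat2" where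
  "mmult A B = (\<lambda>i j. sc_add (sc_mult (A i False) (B False j)) (sc_mult (A i True) (B True j)))"

definition mone :: "'k::comm_ring_1 mat2" where
  "mone = (\<lambda>i j. if i = j then sc_one else (\<lambda>_. 0))"

primrec mpow :: "'k::comm_ring_1 mat2 \<Rightarrow> nat \<Rightarrow> 'k mat2" where
  "mpow A 0 = mone"
| "mpow A (Suc n) = mmult (mpow A n) A"

definition mprod :: "'k::comm_ring_1 mat2 list \<Rightarrow> 'k mat2" where
  "mprod As = foldr mmult As mone"

definition mcomm :: "'k::comm_ring_1 mat2 \<Rightarrow> 'k mat2 \<Rightarrow> 'k mat2" where
  "mcomm A B = madd (mmult A B) (msmult (- 1) (mmult B A))"

text \<open>C_1 = [[x_1, y_1], [y_1', x_1']], C_2 = [[x_2, y_2], [y_2', x_2']].\<close>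
definition C1 :: "'k::comm_ring_1 mat2" where
  "C1 = (\<lambda>i j. if \<not> i \<and> \<not> j then xv 0 else if \<not> i \<and> j then yv 0
               else if i \<and> \<not> j then yv 2 else xv 2)"

definition C2 :: "'k::comm_ring_1 mat2" where
  "C2 = (\<lambda>i j. if \<not> i \<and> \<not> j then xv 1 else if \<not> i \<and> j then yv 1
               else if i \<and> \<not> j then yv 3 else xv 3)"

definition Cgen :: "nat \<Rightarrow> 'k::comm_ring_1 mat2" where
  "Cgen j = (if j = 1 then C1 else C2)"

inductive_set Falg :: "'k::comm_ring_1 mat2 set" where
  one: "mone \<in> Falg"
| gen1: "C1 \<in> Falg"
| gen2: "C2 \<in> Falg"
| smult: "A \<in> Falg \<Longrightarrow> msmult c A \<in> Falg"
| add: "A \<in> Falg \<Longrightarrow> B \<in> Falg \<Longrightarrow> madd A B \<in> Falg"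
| mult: "A \<in> Falg \<Longrightarrow> B \<in> Falg \<Longrightarrow> mmult A B \<in> Falg"

definition central_in_F :: "'k::comm_ring_1 mat2 \<Rightarrow> bool" where
  "central_in_F f \<longleftrightarrow> f \<in> Falg \<and> (\<forall>g \<in> Falg. mmult f g = mmult g f)"

text \<open>Evaluation at (C_1, C_2) of the left normed commutator
  [t_1, t_2, t_(j_3), ..., t_(j_l)], given by js = [j_3, ..., j_l].\<close>
definition lncomm :: "nat list \<Rightarrow> 'k::comm_ring_1 mat2" where
  "lncomm js = foldl (\<lambda>A j. mcomm A (Cgen j)) (mcomm C1 C2) js"

text \<open>f = C_1^n C_2^m u_1^(k_1) ... u_r^(k_r), where us = [(js_1,k_1),...,(js_r,k_r)]
  and u_i = lncomm js_i.\<close>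
definition fmono :: "nat \<Rightarrow> nat \<Rightarrow> (nat list \<times> nat) list \<Rightarrow> 'k::comm_ring_1 mat2" where
  "fmono n m us = mmult (mpow C1 n) (mmult (mpow C2 m)
      (mprod (map (\<lambda>(js, k). mpow (lncomm js) k) us)))"

end

theory Submission
  imports Defs
begin

definition fin_mono :: "(nat \<Rightarrow> nat) \<times> nat set \<Rightarrow> bool" where
  "fin_mono mo \<longleftrightarrow> finite {i. fst mo i \<noteq> 0} \<and> finite (snd mo)"

definition nice :: "'k::comm_ring_1 sc \<Rightarrow> bool" where
  "nice f \<longleftrightarrow> (\<forall>mo. f mo \<noteq> 0 \<longrightarrow> fin_mono mo)"

definition Dset :: "(nat \<Rightarrow> nat) \<Rightarrow> nat set \<Rightarrow> ((nat \<Rightarrow> nat) \<times> nat set) set" where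
  "Dset a S = {(b, T). b \<le> a \<and> T \<subseteq> S}"

lemma sc_mult_eq: "sc_mult f g (a, S) = (\<Sum>(b, T) \<in> Dset a S.
       gsign T (S - T) * f (b, T) * g (\<lambda>i. a i - b i, S - T))"
  by (simp add: sc_mult_def Dset_def)

lemma finite_le_fun:
  fixes a :: "nat \<Rightarrow> nat"
  assumes "finite {i. a i \<noteq> 0}"
  shows "finite {b. b \<le> a}"
proof -
  let ?A = "{i. a i \<noteq> 0}"
  let ?B = "{..Max (a ` ?A)}"
  have "{b. b \<le> a} \<subseteq> {f. \<forall>x. (x \<in> ?A \<longrightarrow> f x \<in> ?B) \<and> (x \<notin> ?A \<longrightarrow> f x = 0)}"
  proof (intro subsetI CollectI allI conjI impI)
    fix b :: "nat \<Rightarrow> nat" and x assume "b \<in> {b. b \<le> a}"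
    then have bx: "b x \<le> a x" by (simp add: le_fun_def)
    show "b x \<in> ?B" if "x \<in> ?A"
      using bx assms that by (auto intro: le_trans[OF bx] Max_ge)
    show "b x = 0" if "x \<notin> ?A" using bx that by simp
  qed
  moreover have "finite {f. \<forall>x. (x \<in> ?A \<longrightarrow> f x \<in> ?B) \<and> (x \<notin> ?A \<longrightarrow> f x = 0)}"
    by (rule finite_set_of_finite_funs) (use assms in auto)
  ultimately show ?thesis by (rule finite_subset)
qed

lemma finite_Dset: "fin_mono (a, S) \<Longrightarrow> finite (Dset a S)"
proof -
  assume "fin_mono (a, S)"
  then have 1: "finite {b. b \<le> a}" and 2: "finite (Pow S)"
    by (auto simp: fin_mono_def intro: finite_le_fun)
  have "Dset a S = {b. b \<le> a} \<times> Pow S" by (auto simp: Dset_def)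
  then show ?thesis using 1 2 by simp
qed

lemma infinite_Dset: "\<not> fin_mono (a, S) \<Longrightarrow> infinite (Dset a S)"
proof (intro notI)
  assume nf: "\<not> fin_mono (a, S)" and fin: "finite (Dset a S)"
  show False
  proof (cases "finite S")
    case False
    have sub: "(\<lambda>T. ((\<lambda>_::nat. 0::nat), T)) ` Pow S \<subseteq> Dset a S" by (auto simp: Dset_def le_fun_def)
    have "finite ((\<lambda>T. ((\<lambda>_::nat. 0::nat), T)) ` Pow S)" using finite_subset[OF sub fin] by simp
    then have "finite (Pow S)" by (rule finite_imageD) (simp add: inj_on_def)
    then show False using False by simp
  next
    case True
    then have inf: "infinite {i. a i \<noteq> 0}" using nf by (simp add: fin_mono_def)
    have sub: "(\<lambda>i. ((\<lambda>_::nat. 0::nat)(i := 1), {}::nat set)) ` {i. a i \<noteq> 0} \<subseteq> Dset a S"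
    proof
      fix z assume "z \<in> (\<lambda>i. ((\<lambda>_::nat. 0::nat)(i := 1), {}::nat set)) ` {i. a i \<noteq> 0}"
      then obtain i where i: "a i \<noteq> 0" "z = ((\<lambda>_::nat. 0::nat)(i := 1), {})" by blast
      have "(\<lambda>_::nat. 0::nat)(i := 1) \<le> a" unfolding le_fun_def using i(1) by simp
      then show "z \<in> Dset a S" using i(2) by (simp add: Dset_def)
    qed
    have "finite ((\<lambda>i. ((\<lambda>_::nat. 0::nat)(i := 1), {}::nat set)) ` {i. a i \<noteq> 0})"
      using finite_subset[OF sub fin] by simp
    moreover have "inj_on (\<lambda>i. ((\<lambda>_::nat. 0::nat)(i := 1), {}::nat set)) {i. a i \<noteq> 0}"
    proof (rule inj_onI)
      fix i j assume "((\<lambda>_::nat. 0::nat)(i := 1), {}::nat set) = ((\<lambda>_::nat. 0::nat)(j := 1), {})"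
      then have "((\<lambda>_::nat. 0::nat)(i := 1)) i = ((\<lambda>_::nat. 0::nat)(j := 1)) i" by simp
      then show "i = j" by (cases "i = j") simp_all
    qed
    ultimately have "finite {i. a i \<noteq> 0}" by (rule finite_imageD)
    then show False using inf by simp
  qed
qed

lemma sc_mult_nonfin: "\<not> fin_mono (a, S) \<Longrightarrow> sc_mult f g (a, S) = 0"
  by (simp add: sc_mult_eq infinite_Dset)

lemma nice_mult: "nice (sc_mult f g)"
  unfolding nice_def by (metis sc_mult_nonfin surj_pair)

lemma nice_add: "nice f \<Longrightarrow> nice g \<Longrightarrow> nice (sc_add f g)"
  unfolding nice_def sc_add_def by (metis add.left_neutral)

lemma nice_smult: "nice f \<Longrightarrow> nice (sc_smult c f)"
  unfolding nice_def sc_smult_def by (metis mult_zero_right)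

lemma nice_zero: "nice (\<lambda>_. 0)" by (simp add: nice_def)

lemma nice_one: "nice sc_one" by (auto simp: nice_def sc_one_def fin_mono_def)

lemma nice_xv: "nice (xv i)" by (auto simp: nice_def xv_def fin_mono_def)
lemma nice_yv: "nice (yv i)" by (auto simp: nice_def yv_def fin_mono_def)

lemma finite_pairs: "finite A \<Longrightarrow> finite B \<Longrightarrow> finite {(t, u). t \<in> A \<and> u \<in> B \<and> P t u}"
  by (rule finite_subset[of _ "A \<times> B"]) auto

lemma gsign_Un_left:
  assumes "finite A" "finite B" "finite C" "A \<inter> B = {}"
  shows "(gsign (A \<union> B) C :: 'k::comm_ring_1) = gsign A C * gsign B C"
proof -
  let ?P = "{(t, u). t \<in> A \<and> u \<in> C \<and> u < t}"
  let ?Q = "{(t, u). t \<in> B \<and> u \<in> C \<and> u < t}"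
  have e: "{(t, u). t \<in> A \<union> B \<and> u \<in> C \<and> u < t} = ?P \<union> ?Q" by auto
  have fa: "finite ?P" by (rule finite_pairs[OF assms(1) assms(3)])
  have fb: "finite ?Q" by (rule finite_pairs[OF assms(2) assms(3)])
  have d: "?P \<inter> ?Q = {}" using assms(4) by auto
  show ?thesis unfolding gsign_def e card_Un_disjoint[OF fa fb d] power_add ..
qed

lemma gsign_Un_right:
  assumes "finite A" "finite B" "finite C" "B \<inter> C = {}"
  shows "(gsign A (B \<union> C) :: 'k::comm_ring_1) = gsign A B * gsign A C"
proof -
  let ?P = "{(t, u). t \<in> A \<and> u \<in> B \<and> u < t}"
  let ?Q = "{(t, u). t \<in> A \<and> u \<in> C \<and> u < t}"
  have e: "{(t, u). t \<in> A \<and> u \<in> B \<union> C \<and> u < t} = ?P \<union> ?Q" by auto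
  have fa: "finite ?P" by (rule finite_pairs[OF assms(1) assms(2)])
  have fb: "finite ?Q" by (rule finite_pairs[OF assms(1) assms(3)])
  have d: "?P \<inter> ?Q = {}" using assms(4) by auto
  show ?thesis unfolding gsign_def e card_Un_disjoint[OF fa fb d] power_add ..
qed

lemma gsign_empty [simp]: "gsign {} B = 1" "gsign A {} = 1"
  by (simp_all add: gsign_def)

lemma gsign_swap:
  assumes "finite A" "finite B" "A \<inter> B = {}"
  shows "(gsign B A :: 'k::comm_ring_1) = (-1) ^ (card A * card B) * gsign A B"
proof -
  let ?X = "{(t, u). t \<in> A \<and> u \<in> B \<and> u < t}"
  let ?Y = "{(t, u). t \<in> B \<and> u \<in> A \<and> u < t}"
  have "?X \<union> (\<lambda>(t,u). (u,t)) ` ?Y = A \<times> B"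
  proof (rule set_eqI)
    fix z :: "nat \<times> nat"
    obtain t u where z: "z = (t, u)" by (cases z)
    show "z \<in> ?X \<union> (\<lambda>(t,u). (u,t)) ` ?Y \<longleftrightarrow> z \<in> A \<times> B"
    proof
      assume "z \<in> A \<times> B"
      then have tu: "t \<in> A" "u \<in> B" using z by auto
      then have "t \<noteq> u" using assms(3) by auto
      then consider "u < t" | "t < u" by linarith
      then show "z \<in> ?X \<union> (\<lambda>(t,u). (u,t)) ` ?Y"
      proof cases
        case 1 then show ?thesis using tu z by auto
      next
        case 2 then have "(u, t) \<in> ?Y" using tu by auto
        then have "(\<lambda>(t,u). (u,t)) (u, t) \<in> (\<lambda>(t,u). (u,t)) ` ?Y" by (rule imageI)
        then show ?thesis using z by auto
      qed
    qed (use z in auto)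
  qed
  then have eq: "A \<times> B = ?X \<union> (\<lambda>(t,u). (u,t)) ` ?Y" by simp
  have disj: "?X \<inter> (\<lambda>(t,u). (u,t)) ` ?Y = {}" by auto
  have cimg: "card ((\<lambda>(t,u). (u,t)) ` ?Y) = card ?Y"
    by (rule card_image) (auto simp: inj_on_def)
  have fX: "finite ?X" by (rule finite_pairs) (use assms in auto)
  have fY: "finite ?Y" by (rule finite_pairs) (use assms in auto)
  have fI: "finite ((\<lambda>(t,u). (u,t)) ` ?Y)" by (rule finite_imageI[OF fY])
  have "card (A \<times> B) = card ?X + card ?Y"
    unfolding eq card_Un_disjoint[OF fX fI disj] cimg ..
  then have cXY: "card ?X + card ?Y = card A * card B"
    by (simp add: card_cartesian_product)
  have sq: "(-1::'k) ^ x * (-1) ^ x = 1" for x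
    by (simp add: power_mult_distrib[symmetric])
  have "(-1::'k) ^ (card A * card B) * gsign A B = (-1) ^ (card ?X + card ?Y) * (-1) ^ card ?X"
    by (simp only: gsign_def cXY)
  also have "\<dots> = (-1) ^ card ?Y * ((-1) ^ card ?X * (-1) ^ card ?X)"
    by (simp only: power_add) (simp add: ac_simps)
  also have "\<dots> = (-1) ^ card ?Y" by (simp only: sq mult_1_right)
  finally have calc: "(-1::'k) ^ (card A * card B) * gsign A B = (-1) ^ card ?Y" .
  have gBA: "gsign B A = (-1::'k) ^ card ?Y" by (simp only: gsign_def)
  show ?thesis by (simp only: gBA calc)
qed


definition fsub :: "(nat \<Rightarrow> nat) \<Rightarrow> (nat \<Rightarrow> nat) \<Rightarrow> nat \<Rightarrow> nat" where
  "fsub a b = (\<lambda>i. a i - b i)"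
definition fadd :: "(nat \<Rightarrow> nat) \<Rightarrow> (nat \<Rightarrow> nat) \<Rightarrow> nat \<Rightarrow> nat" where
  "fadd a b = (\<lambda>i. a i + b i)"

lemma sc_mult_eq2: "sc_mult f g (a, S) = (\<Sum>x \<in> Dset a S.
       gsign (snd x) (S - snd x) * f x * g (fsub a (fst x), S - snd x))"
  by (simp add: sc_mult_eq fsub_def split_def)

lemma fadd_fsub: "c \<le> b \<Longrightarrow> fadd c (fsub b c) = b"
  by (simp add: fadd_def fsub_def fun_eq_iff le_fun_def)
lemma fsub_fadd: "fsub (fadd c d) c = d"
  by (simp add: fadd_def fsub_def fun_eq_iff)
lemma fsub_mono: "b \<le> a \<Longrightarrow> fsub b c \<le> fsub a c"
  by (simp add: fsub_def le_fun_def diff_le_mono)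
lemma fadd_le: "c \<le> a \<Longrightarrow> d \<le> fsub a c \<Longrightarrow> fadd c d \<le> a"
  by (simp add: fadd_def fsub_def le_fun_def) (metis le_diff_conv2 add.commute)
lemma le_fadd: "c \<le> fadd c d"
  by (simp add: fadd_def le_fun_def)
lemma fsub_fsub: "c \<le> b \<Longrightarrow> b \<le> a \<Longrightarrow> fsub (fsub a c) (fsub b c) = fsub a b"
  by (simp add: fsub_def fun_eq_iff le_fun_def)

lemma sc_mult_eq3: "sc_mult f g x = (\<Sum>y \<in> Dset (fst x) (snd x).
       gsign (snd y) (snd x - snd y) * f y * g (fsub (fst x) (fst y), snd x - snd y))"
  by (cases x) (simp add: sc_mult_eq2)

lemma fin_mono_sub: "fin_mono (a, S) \<Longrightarrow> (b, T) \<in> Dset a S \<Longrightarrow> fin_mono (b, T)"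
proof -
  assume fm: "fin_mono (a, S)" and d: "(b, T) \<in> Dset a S"
  then have "b \<le> a" "T \<subseteq> S" by (auto simp: Dset_def)
  then have "{i. b i \<noteq> 0} \<subseteq> {i. a i \<noteq> 0}" by (auto simp: le_fun_def intro: less_le_trans)
  then show ?thesis using fm \<open>T \<subseteq> S\<close> by (auto simp: fin_mono_def intro: finite_subset)
qed

lemma sc_mult_assoc:
  fixes f g h :: "'k::comm_ring_1 sc"
  shows "sc_mult (sc_mult f g) h = sc_mult f (sc_mult g h)"
proof (rule ext, clarify)
  fix a S
  show "sc_mult (sc_mult f g) h (a, S) = sc_mult f (sc_mult g h) (a, S)"
  proof (cases "fin_mono (a, S)")
    case False then show ?thesis by (simp add: sc_mult_nonfin)
  next
    case fm: True
    let ?D = "Dset a S"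
    have finD: "finite ?D" using fm by (rule finite_Dset)
    have fS: "finite S" using fm by (simp add: fin_mono_def)
    let ?F = "\<lambda>x y. gsign (snd x) (S - snd x) * gsign (snd y) (snd x - snd y) * f y
          * g (fsub (fst x) (fst y), snd x - snd y) * h (fsub a (fst x), S - snd x)"
    have L: "sc_mult (sc_mult f g) h (a, S) = (\<Sum>x \<in> ?D. \<Sum>y \<in> Dset (fst x) (snd x). ?F x y)"
      by (simp add: sc_mult_eq2 sc_mult_eq3[of f g] sum_distrib_left sum_distrib_right mult.assoc)
    also have "\<dots> = (\<Sum>x \<in> ?D. \<Sum>y \<in> {y. y \<in> ?D \<and> fst y \<le> fst x \<and> snd y \<subseteq> snd x}. ?F x y)"
    proof (rule sum.cong[OF refl])
      fix x assume "x \<in> ?D"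
      then have "Dset (fst x) (snd x) = {y. y \<in> ?D \<and> fst y \<le> fst x \<and> snd y \<subseteq> snd x}"
        by (auto simp: Dset_def intro: order_trans) (blast)
      then show "sum (?F x) (Dset (fst x) (snd x)) = sum (?F x) {y. y \<in> ?D \<and> fst y \<le> fst x \<and> snd y \<subseteq> snd x}"
        by simp
    qed
    also have "\<dots> = (\<Sum>y \<in> ?D. \<Sum>x \<in> {x. x \<in> ?D \<and> fst y \<le> fst x \<and> snd y \<subseteq> snd x}. ?F x y)"
      by (rule sum.swap_restrict[OF finD finD])
    also have "\<dots> = (\<Sum>y \<in> ?D. gsign (snd y) (S - snd y) * f y *
        (\<Sum>z \<in> Dset (fsub a (fst y)) (S - snd y). gsign (snd z) (S - snd y - snd z) * g z
           * h (fsub (fsub a (fst y)) (fst z), S - snd y - snd z)))"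
    proof (rule sum.cong[OF refl])
      fix y assume yD: "y \<in> ?D"
      obtain c U where y: "y = (c, U)" by (cases y)
      have cU: "c \<le> a" "U \<subseteq> S" using yD y by (auto simp: Dset_def)
      have fU: "finite U" using cU fS finite_subset by blast
      show "(\<Sum>x \<in> {x. x \<in> ?D \<and> fst y \<le> fst x \<and> snd y \<subseteq> snd x}. ?F x y) =
        gsign (snd y) (S - snd y) * f y *
        (\<Sum>z \<in> Dset (fsub a (fst y)) (S - snd y). gsign (snd z) (S - snd y - snd z) * g z
           * h (fsub (fsub a (fst y)) (fst z), S - snd y - snd z))"
        unfolding sum_distrib_left
      proof (rule sum.reindex_bij_witness[where i = "\<lambda>(d, V). (fadd c d, U \<union> V)"
                                             and j = "\<lambda>(b, T). (fsub b c, T - U)"])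
        fix x assume "x \<in> {x. x \<in> ?D \<and> fst y \<le> fst x \<and> snd y \<subseteq> snd x}"
        then obtain b T where x: "x = (b, T)" "b \<le> a" "T \<subseteq> S" "c \<le> b" "U \<subseteq> T"
          using y by (cases x) (auto simp: Dset_def)
        have "U \<union> (T - U) = T" using x by blast
        then show "(\<lambda>(d, V). (fadd c d, U \<union> V)) ((\<lambda>(b, T). (fsub b c, T - U)) x) = x"
          using x by (simp add: fadd_fsub)
        have "T - U \<subseteq> S - U" using x by blast
        then show "(\<lambda>(b, T). (fsub b c, T - U)) x \<in> Dset (fsub a (fst y)) (S - snd y)"
          using x y by (simp add: Dset_def fsub_mono)
        have fT: "finite T" using x fS finite_subset by blast
        have e1: "T = U \<union> (T - U)" "S - U = (T - U) \<union> (S - T)" using x by auto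
        have s1: "(gsign T (S - T) :: 'k) = gsign U (S - T) * gsign (T - U) (S - T)"
        proof -
          have "(gsign (U \<union> (T - U)) (S - T) :: 'k) = gsign U (S - T) * gsign (T - U) (S - T)"
            by (rule gsign_Un_left) (use fU fT fS in auto)
          then show ?thesis using e1(1) by simp
        qed
        have s2: "(gsign U (S - U) :: 'k) = gsign U (T - U) * gsign U (S - T)"
        proof -
          have "(gsign U ((T - U) \<union> (S - T)) :: 'k) = gsign U (T - U) * gsign U (S - T)"
            by (rule gsign_Un_right) (use fU fT fS in auto)
          then show ?thesis using e1(2) by simp
        qed
        have "fsub (fsub a c) (fsub b c) = fsub a b"
          using x by (simp add: fsub_fsub)
        moreover have "S - U - (T - U) = S - T" using x by auto
        ultimately show "gsign (snd y) (S - snd y) * f y *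
          (gsign (snd ((\<lambda>(b, T). (fsub b c, T - U)) x)) (S - snd y - snd ((\<lambda>(b, T). (fsub b c, T - U)) x)) *
          g ((\<lambda>(b, T). (fsub b c, T - U)) x) *
          h (fsub (fsub a (fst y)) (fst ((\<lambda>(b, T). (fsub b c, T - U)) x)),
              S - snd y - snd ((\<lambda>(b, T). (fsub b c, T - U)) x))) = ?F x y"
          using x y s1 s2 by (simp add: mult_ac)
      next
        fix z assume "z \<in> Dset (fsub a (fst y)) (S - snd y)"
        then obtain d V where z: "z = (d, V)" "d \<le> fsub a c" "V \<subseteq> S - U"
          using y by (cases z) (auto simp: Dset_def)
        have "U \<union> V - U = V" using z by blast
        then show "(\<lambda>(b, T). (fsub b c, T - U)) ((\<lambda>(d, V). (fadd c d, U \<union> V)) z) = z"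
          using z by (simp add: fsub_fadd)
        have "U \<union> V \<subseteq> S" using z cU by blast
        then show "(\<lambda>(d, V). (fadd c d, U \<union> V)) z \<in> {x. x \<in> ?D \<and> fst y \<le> fst x \<and> snd y \<subseteq> snd x}"
          using z y cU by (simp add: Dset_def fadd_le le_fadd)
      qed
    qed
    also have "\<dots> = sc_mult f (sc_mult g h) (a, S)"
      by (simp add: sc_mult_eq2 mult.assoc)
    finally show ?thesis .
  qed
qed


lemma sc_mult_add_left: "sc_mult (sc_add f g) h = sc_add (sc_mult f h) (sc_mult g h)"
  by (rule ext, clarify) (simp add: sc_mult_eq2 sc_add_def distrib_left distrib_right sum.distrib)

lemma sc_mult_add_right: "sc_mult h (sc_add f g) = sc_add (sc_mult h f) (sc_mult h g)"
  by (rule ext, clarify) (simp add: sc_mult_eq2 sc_add_def distrib_left distrib_right sum.distrib)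

lemma sc_mult_smult_left: "sc_mult (sc_smult c f) g = sc_smult c (sc_mult f g)"
  by (rule ext, clarify) (simp add: sc_mult_eq2 sc_smult_def sum_distrib_left mult_ac)

lemma sc_mult_smult_right: "sc_mult f (sc_smult c g) = sc_smult c (sc_mult f g)"
  by (rule ext, clarify) (simp add: sc_mult_eq2 sc_smult_def sum_distrib_left mult_ac)

lemma fsub_zero [simp]: "fsub a (\<lambda>_. 0) = a" by (simp add: fsub_def)

lemma nice_nonfin: "nice f \<Longrightarrow> \<not> fin_mono mo \<Longrightarrow> f mo = 0"
  unfolding nice_def by blast

lemma sc_one_mult: "nice f \<Longrightarrow> sc_mult sc_one f = f"
proof (rule ext, clarify)
  fix a S assume nf: "nice f"
  show "sc_mult sc_one f (a, S) = f (a, S)"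
  proof (cases "fin_mono (a, S)")
    case False then show ?thesis using nf by (simp add: sc_mult_nonfin nice_nonfin)
  next
    case True
    have "sc_mult sc_one f (a, S) = (\<Sum>x \<in> Dset a S. if x = (\<lambda>_. 0, {}) then f (a, S) else 0)"
      unfolding sc_mult_eq2 by (rule sum.cong) (auto simp: sc_one_def)
    also have "\<dots> = f (a, S)"
      using finite_Dset[OF True] by (simp add: Dset_def le_fun_def)
    finally show ?thesis .
  qed
qed

lemma sc_mult_one: "nice f \<Longrightarrow> sc_mult f sc_one = f"
proof (rule ext, clarify)
  fix a S assume nf: "nice f"
  show "sc_mult f sc_one (a, S) = f (a, S)"
  proof (cases "fin_mono (a, S)")
    case False then show ?thesis using nf by (simp add: sc_mult_nonfin nice_nonfin)
  next
    case True
    have "sc_mult f sc_one (a, S) = (\<Sum>x \<in> Dset a S. if x = (a, S) then f (a, S) else 0)"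
      unfolding sc_mult_eq2
    proof (rule sum.cong[OF refl])
      fix x assume "x \<in> Dset a S"
      then obtain b T where x: "x = (b, T)" "b \<le> a" "T \<subseteq> S" by (auto simp: Dset_def)
      have "(fsub a b = (\<lambda>_. 0) \<and> S - T = {}) \<longleftrightarrow> x = (a, S)"
        using x by (auto simp: fsub_def fun_eq_iff le_fun_def intro: antisym)
      then show "gsign (snd x) (S - snd x) * f x * sc_one (fsub a (fst x), S - snd x) =
                 (if x = (a, S) then f (a, S) else 0)"
        using x by (auto simp: sc_one_def)
    qed
    also have "\<dots> = f (a, S)"
      using finite_Dset[OF True] by (simp add: Dset_def)
    finally show ?thesis .
  qed
qed

lemma sc_mult_swap_eq: "sc_mult g f (a, S) = (\<Sum>x \<in> Dset a S.
       gsign (S - snd x) (snd x) * f x * g (fsub a (fst x), S - snd x))"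
  unfolding sc_mult_eq2
proof (rule sum.reindex_bij_witness[where i = "\<lambda>(b, T). (fsub a b, S - T)" and j = "\<lambda>(b, T). (fsub a b, S - T)"])
  fix x assume "x \<in> Dset a S"
  then obtain b T where x: "x = (b, T)" "b \<le> a" "T \<subseteq> S" by (auto simp: Dset_def)
  have "fsub a (fsub a b) = b" using x by (simp add: fsub_def fun_eq_iff le_fun_def)
  moreover have "S - (S - T) = T" using x by blast
  ultimately show "(\<lambda>(b, T). (fsub a b, S - T)) ((\<lambda>(b, T). (fsub a b, S - T)) x) = x"
    using x by simp
  show "(\<lambda>(b, T). (fsub a b, S - T)) x \<in> Dset a S"
    using x by (auto simp: Dset_def fsub_def le_fun_def)
  show "(\<lambda>(b, T). (fsub a b, S - T)) x \<in> Dset a S"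
    using x by (auto simp: Dset_def fsub_def le_fun_def)
  show "(\<lambda>(b, T). (fsub a b, S - T)) ((\<lambda>(b, T). (fsub a b, S - T)) x) = x"
    using \<open>fsub a (fsub a b) = b\<close> \<open>S - (S - T) = T\<close> x by simp
  show "gsign (S - snd ((\<lambda>(b, T). (fsub a b, S - T)) x)) (snd ((\<lambda>(b, T). (fsub a b, S - T)) x)) *
      f ((\<lambda>(b, T). (fsub a b, S - T)) x) *
      g (fsub a (fst ((\<lambda>(b, T). (fsub a b, S - T)) x)), S - snd ((\<lambda>(b, T). (fsub a b, S - T)) x)) =
      gsign (snd x) (S - snd x) * g x * f (fsub a (fst x), S - snd x)"
    using \<open>fsub a (fsub a b) = b\<close> \<open>S - (S - T) = T\<close> x by (simp add: mult_ac)
qed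

definition sc_even :: "'k::comm_ring_1 sc \<Rightarrow> bool" where
  "sc_even f \<longleftrightarrow> (\<forall>a S. f (a, S) \<noteq> 0 \<longrightarrow> even (card S))"
definition sc_odd :: "'k::comm_ring_1 sc \<Rightarrow> bool" where
  "sc_odd f \<longleftrightarrow> (\<forall>a S. f (a, S) \<noteq> 0 \<longrightarrow> odd (card S))"

lemma sc_even_comm:
  fixes f g :: "'k::comm_ring_1 sc"
  assumes "sc_even f"
  shows "sc_mult f g = sc_mult g f"
proof (rule ext, clarify)
  fix a S
  show "sc_mult f g (a, S) = sc_mult g f (a, S)"
  proof (cases "fin_mono (a, S)")
    case False then show ?thesis by (simp add: sc_mult_nonfin)
  next
    case True
    have fS: "finite S" using True by (simp add: fin_mono_def)
    have L: "sc_mult f g (a, S) = (\<Sum>x \<in> Dset a S. gsign (snd x) (S - snd x) * f x * g (fsub a (fst x), S - snd x))"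
      by (rule sc_mult_eq2)
    have R: "sc_mult g f (a, S) = (\<Sum>x \<in> Dset a S. gsign (S - snd x) (snd x) * f x * g (fsub a (fst x), S - snd x))"
      by (rule sc_mult_swap_eq)
    show ?thesis unfolding L R
    proof (rule sum.cong[OF refl])
      fix x assume "x \<in> Dset a S"
      then obtain b T where x: "x = (b, T)" "b \<le> a" "T \<subseteq> S" by (auto simp: Dset_def)
      have fT: "finite T" using x fS finite_subset by blast
      show "gsign (snd x) (S - snd x) * f x * g (fsub a (fst x), S - snd x) =
            gsign (S - snd x) (snd x) * f x * g (fsub a (fst x), S - snd x)"
      proof (cases "f x = 0")
        case False
        then have "even (card T)" using assms x by (auto simp: sc_even_def)
        then have "(gsign (S - T) T :: 'k) = gsign T (S - T)"
          using gsign_swap[of T "S - T"] fT fS by auto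
        then show ?thesis using x by simp
      qed simp
    qed
  qed
qed

lemma sc_odd_anticomm:
  fixes f g :: "'k::comm_ring_1 sc"
  assumes "sc_odd f" "sc_odd g"
  shows "sc_mult f g = sc_smult (-1) (sc_mult g f)"
proof (rule ext, clarify)
  fix a S
  show "sc_mult f g (a, S) = sc_smult (-1) (sc_mult g f) (a, S)"
  proof (cases "fin_mono (a, S)")
    case False then show ?thesis by (simp add: sc_mult_nonfin sc_smult_def)
  next
    case True
    have fS: "finite S" using True by (simp add: fin_mono_def)
    have L: "sc_mult f g (a, S) = (\<Sum>x \<in> Dset a S. gsign (snd x) (S - snd x) * f x * g (fsub a (fst x), S - snd x))"
      by (rule sc_mult_eq2)
    have R: "sc_mult g f (a, S) = (\<Sum>x \<in> Dset a S. gsign (S - snd x) (snd x) * f x * g (fsub a (fst x), S - snd x))"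
      by (rule sc_mult_swap_eq)
    show ?thesis unfolding L R sc_smult_def sum_distrib_left
    proof (rule sum.cong[OF refl])
      fix x assume "x \<in> Dset a S"
      then obtain b T where x: "x = (b, T)" "b \<le> a" "T \<subseteq> S" by (auto simp: Dset_def)
      have fT: "finite T" using x fS finite_subset by blast
      show "gsign (snd x) (S - snd x) * f x * g (fsub a (fst x), S - snd x) =
            - 1 * (gsign (S - snd x) (snd x) * f x * g (fsub a (fst x), S - snd x))"
      proof (cases "f x = 0 \<or> g (fsub a (fst x), S - snd x) = 0")
        case False
        then have "odd (card T)" "odd (card (S - T))" using assms x
          by (auto simp: sc_odd_def)
        then have "(gsign (S - T) T :: 'k) = - gsign T (S - T)"
          using gsign_swap[of T "S - T"] fT fS by auto
        then show ?thesis using x by simp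
      qed auto
    qed
  qed
qed

lemma sc_mult_nz:
  assumes "sc_mult f g (a, S) \<noteq> 0"
  obtains b T where "b \<le> a" "T \<subseteq> S" "f (b, T) \<noteq> 0" "g (fsub a b, S - T) \<noteq> 0" "finite S"
proof -
  have "fin_mono (a, S)" using assms sc_mult_nonfin by blast
  then have fS: "finite S" by (simp add: fin_mono_def)
  from assms obtain x where xD: "x \<in> Dset a S" and
    nz: "gsign (snd x) (S - snd x) * f x * g (fsub a (fst x), S - snd x) \<noteq> 0"
    unfolding sc_mult_eq2 by (meson sum.not_neutral_contains_not_neutral)
  obtain b T where x: "x = (b, T)" by (cases x)
  have "f (b, T) \<noteq> 0" "g (fsub a b, S - T) \<noteq> 0" using nz x by auto
  then show ?thesis using that fS xD x by (auto simp: Dset_def)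
qed

lemma card_split: "finite S \<Longrightarrow> T \<subseteq> S \<Longrightarrow> card S = card T + card (S - T)"
  by (metis card_Diff_subset card_mono finite_subset le_add_diff_inverse)

lemma sc_even_mult_ee: "sc_even f \<Longrightarrow> sc_even g \<Longrightarrow> sc_even (sc_mult f g)"
  unfolding sc_even_def by (metis card_split even_add sc_mult_nz)
lemma sc_even_mult_oo: "sc_odd f \<Longrightarrow> sc_odd g \<Longrightarrow> sc_even (sc_mult f g)"
  unfolding sc_even_def sc_odd_def by (metis card_split even_add sc_mult_nz)
lemma sc_odd_mult_eo: "sc_even f \<Longrightarrow> sc_odd g \<Longrightarrow> sc_odd (sc_mult f g)"
  unfolding sc_even_def sc_odd_def by (metis card_split even_add sc_mult_nz)
lemma sc_odd_mult_oe: "sc_odd f \<Longrightarrow> sc_even g \<Longrightarrow> sc_odd (sc_mult f g)"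
  unfolding sc_even_def sc_odd_def by (metis card_split even_add sc_mult_nz)

lemma sc_even_add: "sc_even f \<Longrightarrow> sc_even g \<Longrightarrow> sc_even (sc_add f g)"
  unfolding sc_even_def sc_add_def by (metis add.left_neutral add.right_neutral)
lemma sc_odd_add: "sc_odd f \<Longrightarrow> sc_odd g \<Longrightarrow> sc_odd (sc_add f g)"
  unfolding sc_odd_def sc_add_def by (metis add.left_neutral add.right_neutral)
lemma sc_even_smult: "sc_even f \<Longrightarrow> sc_even (sc_smult c f)"
  unfolding sc_even_def sc_smult_def by (metis mult_zero_right)
lemma sc_odd_smult: "sc_odd f \<Longrightarrow> sc_odd (sc_smult c f)"
  unfolding sc_odd_def sc_smult_def by (metis mult_zero_right)

definition mnm :: "(nat \<Rightarrow> nat) \<Rightarrow> nat set \<Rightarrow> 'k::comm_ring_1 \<Rightarrow> 'k sc" where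
  "mnm a S c = (\<lambda>mo. if mo = (a, S) then c else 0)"

lemma mono_mult:
  fixes c d :: "'k::comm_ring_1"
  assumes "fin_mono (a, S)" "fin_mono (b, T)"
  shows "sc_mult (mnm a S c) (mnm b T d) =
     (if S \<inter> T = {} then mnm (fadd a b) (S \<union> T) (gsign S T * c * d) else (\<lambda>_. 0))"
proof (rule ext, clarify)
  fix e U
  have fS: "finite S" using assms by (simp add: fin_mono_def)
  show "sc_mult (mnm a S c) (mnm b T d) (e, U) =
     (if S \<inter> T = {} then mnm (fadd a b) (S \<union> T) (gsign S T * c * d) else (\<lambda>_. 0)) (e, U)"
  proof (cases "(e, U) = (fadd a b, S \<union> T) \<and> S \<inter> T = {}")
    case True
    then have eU: "e = fadd a b" "U = S \<union> T" "S \<inter> T = {}" by auto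
    have "sc_mult (mnm a S c) (mnm b T d) (e, U) =
      (\<Sum>x \<in> Dset e U. if x = (a, S) then gsign S T * c * d else 0)"
      unfolding sc_mult_eq2
    proof (rule sum.cong[OF refl])
      fix x assume "x \<in> Dset e U"
      have "fsub e a = b" "U - S = T" using eU by (auto simp: fsub_def fadd_def fun_eq_iff)
      then show "gsign (snd x) (U - snd x) * mnm a S c x * mnm b T d (fsub e (fst x), U - snd x) =
          (if x = (a, S) then gsign S T * c * d else 0)"
        by (cases "x = (a, S)") (simp_all add: mnm_def)
    qed
    also have "\<dots> = gsign S T * c * d"
    proof -
      have "fin_mono (e, U)" using assms eU
        by (auto simp: fin_mono_def fadd_def)
      moreover have "(a, S) \<in> Dset e U" using eU by (auto simp: Dset_def fadd_def le_fun_def)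
      ultimately show ?thesis using finite_Dset by simp
    qed
    finally show ?thesis using True by (simp add: mnm_def)
  next
    case False
    have "sc_mult (mnm a S c) (mnm b T d) (e, U) = (\<Sum>x \<in> Dset e U. 0)"
      unfolding sc_mult_eq2
    proof (rule sum.cong[OF refl])
      fix x assume "x \<in> Dset e U"
      then obtain b' T' where x: "x = (b', T')" "b' \<le> e" "T' \<subseteq> U" by (auto simp: Dset_def)
      show "gsign (snd x) (U - snd x) * mnm a S c x * mnm b T d (fsub e (fst x), U - snd x) = 0"
      proof (cases "x = (a, S) \<and> (fsub e a, U - S) = (b, T)")
        case True
        then have ae: "a \<le> e" "S \<subseteq> U" "fsub e a = b" "U - S = T" using x by auto
        then have "e = fadd a b" unfolding fun_eq_iff fadd_def
          by (metis ae(1) ae(3) fsub_def le_add_diff_inverse le_funD)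
        moreover have "U = S \<union> T" "S \<inter> T = {}" using ae by auto
        ultimately show ?thesis using False by simp
      next
        case False then show ?thesis by (auto simp: mnm_def)
      qed
    qed
    then show ?thesis using False by (auto simp: mnm_def)
  qed
qed


typedef (overloaded) ('k::comm_ring_1) R = "{f :: 'k sc. nice f}" morphisms Rep_R Abs_R
  by (rule exI[of _ "\<lambda>_. 0"]) (simp add: nice_zero)

setup_lifting type_definition_R

instantiation R :: (comm_ring_1) ring_1
begin
lift_definition zero_R :: "'a R" is "\<lambda>_. 0" by (rule nice_zero)
lift_definition one_R :: "'a R" is sc_one by (rule nice_one)
lift_definition plus_R :: "'a R \<Rightarrow> 'a R \<Rightarrow> 'a R" is sc_add by (rule nice_add)
lift_definition uminus_R :: "'a R \<Rightarrow> 'a R" is "sc_smult (-1)" by (rule nice_smult)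
lift_definition minus_R :: "'a R \<Rightarrow> 'a R \<Rightarrow> 'a R" is "\<lambda>f g. sc_add f (sc_smult (-1) g)"
  by (rule nice_add, assumption, rule nice_smult)
lift_definition times_R :: "'a R \<Rightarrow> 'a R \<Rightarrow> 'a R" is sc_mult by (rule nice_mult)
instance
proof
  fix a b c :: "'a R"
  show "a * b * c = a * (b * c)" by transfer (rule sc_mult_assoc)
  show "a + b + c = a + (b + c)" by transfer (simp add: sc_add_def add.assoc)
  show "a + b = b + a" by transfer (simp add: sc_add_def add.commute)
  show "0 + a = a" by transfer (simp add: sc_add_def)
  show "- a + a = 0" by transfer (simp add: sc_add_def sc_smult_def)
  show "a - b = a + - b" by transfer simp
  show "1 * a = a" by transfer (rule sc_one_mult)
  show "a * 1 = a" by transfer (rule sc_mult_one)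
  show "(a + b) * c = a * c + b * c" by transfer (rule sc_mult_add_left)
  show "a * (b + c) = a * b + a * c" by transfer (rule sc_mult_add_right)
  show "(0::'a R) \<noteq> 1"
  proof transfer
    show "(\<lambda>_. 0::'a) \<noteq> sc_one"
    proof
      assume "(\<lambda>_. 0::'a) = sc_one"
      then have "(0::'a) = sc_one (\<lambda>_. 0, {})" by (metis)
      then show False by (simp add: sc_one_def)
    qed
  qed
qed
end

lift_definition evR :: "'k::comm_ring_1 R \<Rightarrow> bool" is sc_even .
lift_definition odR :: "'k::comm_ring_1 R \<Rightarrow> bool" is sc_odd .

lemma evR_comm: "evR x \<Longrightarrow> x * y = y * x"
  by transfer (rule sc_even_comm)

lemma odR_anti: "odR x \<Longrightarrow> odR y \<Longrightarrow> x * y = - (y * x)"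
  by transfer (rule sc_odd_anticomm)

lemma evR_mult_ee: "evR x \<Longrightarrow> evR y \<Longrightarrow> evR (x * y)" by transfer (rule sc_even_mult_ee)
lemma evR_mult_oo: "odR x \<Longrightarrow> odR y \<Longrightarrow> evR (x * y)" by transfer (rule sc_even_mult_oo)
lemma odR_mult_eo: "evR x \<Longrightarrow> odR y \<Longrightarrow> odR (x * y)" by transfer (rule sc_odd_mult_eo)
lemma odR_mult_oe: "odR x \<Longrightarrow> evR y \<Longrightarrow> odR (x * y)" by transfer (rule sc_odd_mult_oe)
lemma evR_add: "evR x \<Longrightarrow> evR y \<Longrightarrow> evR (x + y)" by transfer (rule sc_even_add)
lemma odR_add: "odR x \<Longrightarrow> odR y \<Longrightarrow> odR (x + y)" by transfer (rule sc_odd_add)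
lemma evR_uminus: "evR x \<Longrightarrow> evR (- x)" by transfer (rule sc_even_smult)
lemma odR_uminus: "odR x \<Longrightarrow> odR (- x)" by transfer (rule sc_odd_smult)
lemma evR_diff: "evR x \<Longrightarrow> evR y \<Longrightarrow> evR (x - y)"
  unfolding diff_conv_add_uminus by (intro evR_add evR_uminus)
lemma odR_diff: "odR x \<Longrightarrow> odR y \<Longrightarrow> odR (x - y)"
  unfolding diff_conv_add_uminus by (intro odR_add odR_uminus)
lemma evR_0: "evR 0" by transfer (simp add: sc_even_def)
lemma odR_0: "odR 0" by transfer (simp add: sc_odd_def)
lemma evR_1: "evR 1" by transfer (simp add: sc_even_def sc_one_def)

lift_definition xs :: "nat \<Rightarrow> 'k::comm_ring_1 R" is xv by (rule nice_xv)
lift_definition ys :: "nat \<Rightarrow> 'k::comm_ring_1 R" is yv by (rule nice_yv)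
lift_definition kc :: "'k::comm_ring_1 \<Rightarrow> 'k R" is "\<lambda>c. sc_smult c sc_one"
  by (rule nice_smult, rule nice_one)

lemma evR_xs: "evR (xs i)" by transfer (simp add: sc_even_def xv_def)
lemma odR_ys: "odR (ys i)" by transfer (simp add: sc_odd_def yv_def)
lemma evR_kc: "evR (kc c)" by transfer (simp add: sc_even_def sc_smult_def sc_one_def)

lemma Rep_kc_mult: "Rep_R (kc c * x) = sc_smult c (Rep_R x)"
  by transfer (simp add: sc_mult_smult_left sc_one_mult)

lemma kc_minus1: "kc (-1) * x = - x"
  by transfer (simp add: sc_mult_smult_left sc_one_mult)

lemma yv_mnm: "yv i = mnm (\<lambda>_. 0) {i} 1"
  by (simp add: yv_def mnm_def fun_eq_iff)
lemma xv_mnm: "xv i = mnm ((\<lambda>_. 0)(i := 1)) {} 1"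
  by (simp add: xv_def mnm_def fun_eq_iff)

lemma ys_sq: "ys i * ys i = 0"
  by transfer (simp add: yv_mnm mono_mult fin_mono_def)

lemma ys_sq2: "ys i * (ys i * z) = 0"
  by (simp add: ys_sq flip: mult.assoc)


lemma ys_anti: "ys i * ys j = - (ys j * ys i)" by (rule odR_anti[OF odR_ys odR_ys])
lemma ys_anti_lt: "j < i \<Longrightarrow> ys i * ys j = - (ys j * ys i)" by (rule ys_anti)
lemma ys_anti2: "j < i \<Longrightarrow> ys i * (ys j * z) = - (ys j * (ys i * z))"
proof -
  have "ys i * (ys j * z) = (ys i * ys j) * z" by (simp only: mult.assoc)
  also have "\<dots> = - (ys j * ys i) * z" by (simp only: ys_anti[of i j])
  also have "\<dots> = - (ys j * (ys i * z))" by (simp only: mult_minus_left mult.assoc)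
  finally show ?thesis .
qed
lemma xs_comm: "xs i * y = y * xs i" by (rule evR_comm[OF evR_xs])
lemma xs_ys: "xs i * ys j = ys j * xs i" by (rule xs_comm)
lemma xs_ys2: "xs i * (ys j * z) = ys j * (xs i * z)"
proof -
  have "xs i * (ys j * z) = (xs i * ys j) * z" by (simp only: mult.assoc)
  also have "\<dots> = (ys j * xs i) * z" by (simp only: xs_comm[of i "ys j"])
  finally show ?thesis by (simp only: mult.assoc)
qed
lemma xs_xs: "xs i * xs j = xs j * xs i" by (rule xs_comm)
lemma xs_xs2: "xs i * (xs j * z) = xs j * (xs i * z)"
proof -
  have "xs i * (xs j * z) = (xs i * xs j) * z" by (simp only: mult.assoc)
  also have "\<dots> = (xs j * xs i) * z" by (simp only: xs_comm[of i "xs j"])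
  finally show ?thesis by (simp only: mult.assoc)
qed

lemmas norm_simps = mult.assoc distrib_left distrib_right left_diff_distrib right_diff_distrib
  mult_minus_left mult_minus_right xs_ys xs_ys2 xs_xs xs_xs2 ys_anti_lt ys_anti2 ys_sq ys_sq2

definition "ee = ys 0 * ys 3 + ys 2 * ys 1"
definition "pp = (xs 0 - xs 2) * ys 1 - (xs 1 - xs 3) * ys 0"
definition "qq = (xs 1 - xs 3) * ys 2 - (xs 0 - xs 2) * ys 3"

lemma t_eee: "(ee * (ee * ee) :: 'k::comm_ring_1 R) = 0"
  unfolding ee_def pp_def qq_def by (simp add: norm_simps)
lemma t_eep: "(ee * (ee * pp) :: 'k::comm_ring_1 R) = 0"
  unfolding ee_def pp_def qq_def by (simp add: norm_simps)
lemma t_eeq: "(ee * (ee * qq) :: 'k::comm_ring_1 R) = 0"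
  unfolding ee_def pp_def qq_def by (simp add: norm_simps)
lemma t_epe: "(ee * (pp * ee) :: 'k::comm_ring_1 R) = 0"
  unfolding ee_def pp_def qq_def by (simp add: norm_simps)
lemma t_epp: "(ee * (pp * pp) :: 'k::comm_ring_1 R) = 0"
  unfolding ee_def pp_def qq_def by (simp add: norm_simps)
lemma t_epq: "(ee * (pp * qq) :: 'k::comm_ring_1 R) = 0"
  unfolding ee_def pp_def qq_def by (simp add: norm_simps)
lemma t_eqe: "(ee * (qq * ee) :: 'k::comm_ring_1 R) = 0"
  unfolding ee_def pp_def qq_def by (simp add: norm_simps)
lemma t_eqp: "(ee * (qq * pp) :: 'k::comm_ring_1 R) = 0"
  unfolding ee_def pp_def qq_def by (simp add: norm_simps)
lemma t_eqq: "(ee * (qq * qq) :: 'k::comm_ring_1 R) = 0"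
  unfolding ee_def pp_def qq_def by (simp add: norm_simps)
lemma t_pee: "(pp * (ee * ee) :: 'k::comm_ring_1 R) = 0"
  unfolding ee_def pp_def qq_def by (simp add: norm_simps)
lemma t_pep: "(pp * (ee * pp) :: 'k::comm_ring_1 R) = 0"
  unfolding ee_def pp_def qq_def by (simp add: norm_simps)
lemma t_peq: "(pp * (ee * qq) :: 'k::comm_ring_1 R) = 0"
  unfolding ee_def pp_def qq_def by (simp add: norm_simps)
lemma t_ppe: "(pp * (pp * ee) :: 'k::comm_ring_1 R) = 0"
  unfolding ee_def pp_def qq_def by (simp add: norm_simps)
lemma t_ppp: "(pp * (pp * pp) :: 'k::comm_ring_1 R) = 0"
  unfolding ee_def pp_def qq_def by (simp add: norm_simps)
lemma t_ppq: "(pp * (pp * qq) :: 'k::comm_ring_1 R) = 0"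
  unfolding ee_def pp_def qq_def by (simp add: norm_simps)
lemma t_pqe: "(pp * (qq * ee) :: 'k::comm_ring_1 R) = 0"
  unfolding ee_def pp_def qq_def by (simp add: norm_simps)
lemma t_pqp: "(pp * (qq * pp) :: 'k::comm_ring_1 R) = 0"
  unfolding ee_def pp_def qq_def by (simp add: norm_simps)
lemma t_pqq: "(pp * (qq * qq) :: 'k::comm_ring_1 R) = 0"
  unfolding ee_def pp_def qq_def by (simp add: norm_simps)
lemma t_qee: "(qq * (ee * ee) :: 'k::comm_ring_1 R) = 0"
  unfolding ee_def pp_def qq_def by (simp add: norm_simps)
lemma t_qep: "(qq * (ee * pp) :: 'k::comm_ring_1 R) = 0"
  unfolding ee_def pp_def qq_def by (simp add: norm_simps)
lemma t_qeq: "(qq * (ee * qq) :: 'k::comm_ring_1 R) = 0"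
  unfolding ee_def pp_def qq_def by (simp add: norm_simps)
lemma t_qpe: "(qq * (pp * ee) :: 'k::comm_ring_1 R) = 0"
  unfolding ee_def pp_def qq_def by (simp add: norm_simps)
lemma t_qpp: "(qq * (pp * pp) :: 'k::comm_ring_1 R) = 0"
  unfolding ee_def pp_def qq_def by (simp add: norm_simps)
lemma t_qpq: "(qq * (pp * qq) :: 'k::comm_ring_1 R) = 0"
  unfolding ee_def pp_def qq_def by (simp add: norm_simps)
lemma t_qqe: "(qq * (qq * ee) :: 'k::comm_ring_1 R) = 0"
  unfolding ee_def pp_def qq_def by (simp add: norm_simps)
lemma t_qqp: "(qq * (qq * pp) :: 'k::comm_ring_1 R) = 0"
  unfolding ee_def pp_def qq_def by (simp add: norm_simps)
lemma t_qqq: "(qq * (qq * qq) :: 'k::comm_ring_1 R) = 0"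
  unfolding ee_def pp_def qq_def by (simp add: norm_simps)

lemmas triple_zero = t_eee t_eep t_eeq t_epe t_epp t_epq t_eqe t_eqp t_eqq t_pee t_pep t_peq t_ppe t_ppp t_ppq t_pqe t_pqp t_pqq t_qee t_qep t_qeq t_qpe t_qpp t_qpq t_qqe t_qqp t_qqq


datatype 'a M = M (m11: 'a) (m12: 'a) (m21: 'a) (m22: 'a)

instantiation M :: (ring_1) ring_1
begin
definition "0 = M 0 0 0 0"
definition "1 = M 1 0 0 1"
definition "A + B = M (m11 A + m11 B) (m12 A + m12 B) (m21 A + m21 B) (m22 A + m22 B)"
definition "- A = M (- m11 A) (- m12 A) (- m21 A) (- m22 A)"
definition "A - B = M (m11 A - m11 B) (m12 A - m12 B) (m21 A - m21 B) (m22 A - m22 B)"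
definition "A * B = M (m11 A * m11 B + m12 A * m21 B) (m11 A * m12 B + m12 A * m22 B)
                     (m21 A * m11 B + m22 A * m21 B) (m21 A * m12 B + m22 A * m22 B)"
instance
proof
  fix a b c :: "'a M"
  show "a * b * c = a * (b * c)"
    by (simp add: times_M_def algebra_simps)
  show "a + b + c = a + (b + c)" by (simp add: plus_M_def algebra_simps)
  show "a + b = b + a" by (simp add: plus_M_def algebra_simps)
  show "0 + a = a" by (simp add: plus_M_def zero_M_def)
  show "- a + a = 0" by (simp add: plus_M_def zero_M_def uminus_M_def)
  show "a - b = a + - b" by (simp add: plus_M_def minus_M_def uminus_M_def)
  show "1 * a = a" by (simp add: times_M_def one_M_def)
  show "a * 1 = a" by (simp add: times_M_def one_M_def)
  show "(a + b) * c = a * c + b * c" by (simp add: times_M_def plus_M_def algebra_simps)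
  show "a * (b + c) = a * b + a * c" by (simp add: times_M_def plus_M_def algebra_simps)
  show "(0::'a M) \<noteq> 1" by (simp add: zero_M_def one_M_def)
qed
end

lemma M_mult [simp]: "M a b c d * M a' b' c' d' = M (a * a' + b * c') (a * b' + b * d') (c * a' + d * c') (c * b' + d * d')"
  by (simp add: times_M_def)
lemma M_add [simp]: "M a b c d + M a' b' c' d' = M (a + a') (b + b') (c + c') (d + d')"
  by (simp add: plus_M_def)
lemma M_diff [simp]: "M a b c d - M a' b' c' d' = M (a - a') (b - b') (c - c') (d - d')"
  by (simp add: minus_M_def)
lemma M_uminus [simp]: "- M a b c d = M (- a) (- b) (- c) (- d)"
  by (simp add: uminus_M_def)
lemma M_zero: "0 = M 0 0 0 0" by (simp add: zero_M_def)
lemma M_one: "1 = M 1 0 0 1" by (simp add: one_M_def)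

definition "C1t = M (xs 0) (ys 0) (ys 2) (xs 2)"
definition "C2t = M (xs 1) (ys 1) (ys 3) (xs 3)"
definition "ccM = M ee pp qq ee"

lemma cc_eq: "C1t * C2t - C2t * C1t = (ccM :: 'k::comm_ring_1 R M)"
  unfolding C1t_def C2t_def ccM_def ee_def pp_def qq_def by (simp add: norm_simps)

definition "E11 = M 1 0 0 0"
definition "E12 = M 0 1 0 0"
definition "E21 = M 0 0 1 0"
definition "E22 = M 0 0 0 1"
definition "tw A = M (m11 A) (- m12 A) (- m21 A) (m22 A)"
definition "tw1 A = M (- m11 A) (m12 A) (m21 A) (- m22 A)"

lemma tw_M [simp]: "tw (M a b c d) = M a (- b) (- c) d" by (simp add: tw_def)
lemma tw1_M [simp]: "tw1 (M a b c d) = M (- a) b c (- d)" by (simp add: tw1_def)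

lemmas mat_simps = C1t_def C2t_def ccM_def E11_def E12_def E21_def E22_def

lemma A_C1t_E11: "C1t * (ccM * E11 * ccM) = (ccM * E11 * ccM) * (C1t :: 'k::comm_ring_1 R M)"
  unfolding mat_simps ee_def pp_def qq_def by (simp add: norm_simps)

lemma A_C1t_E22: "C1t * (ccM * E22 * ccM) = (ccM * E22 * ccM) * (C1t :: 'k::comm_ring_1 R M)"
  unfolding mat_simps ee_def pp_def qq_def by (simp add: norm_simps)

lemma A_C1t_E12: "tw C1t * (tw ccM * E12 * ccM) = (tw ccM * E12 * ccM) * (C1t :: 'k::comm_ring_1 R M)"
  unfolding mat_simps ee_def pp_def qq_def by (simp add: norm_simps)

lemma A_C1t_E21: "tw C1t * (tw ccM * E21 * ccM) = (tw ccM * E21 * ccM) * (C1t :: 'k::comm_ring_1 R M)"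
  unfolding mat_simps ee_def pp_def qq_def by (simp add: norm_simps)

lemma A_C2t_E11: "C2t * (ccM * E11 * ccM) = (ccM * E11 * ccM) * (C2t :: 'k::comm_ring_1 R M)"
  unfolding mat_simps ee_def pp_def qq_def by (simp add: norm_simps)

lemma A_C2t_E22: "C2t * (ccM * E22 * ccM) = (ccM * E22 * ccM) * (C2t :: 'k::comm_ring_1 R M)"
  unfolding mat_simps ee_def pp_def qq_def by (simp add: norm_simps)

lemma A_C2t_E12: "tw C2t * (tw ccM * E12 * ccM) = (tw ccM * E12 * ccM) * (C2t :: 'k::comm_ring_1 R M)"
  unfolding mat_simps ee_def pp_def qq_def by (simp add: norm_simps)

lemma A_C2t_E21: "tw C2t * (tw ccM * E21 * ccM) = (tw ccM * E21 * ccM) * (C2t :: 'k::comm_ring_1 R M)"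
  unfolding mat_simps ee_def pp_def qq_def by (simp add: norm_simps)

lemma B_E11_E11: "ccM * E11 * ccM * E11 * ccM = (0 :: 'k::comm_ring_1 R M)"
  unfolding mat_simps by (simp add: mult.assoc distrib_left distrib_right mult_minus_left mult_minus_right triple_zero M_zero)

lemma B_E11_E22: "ccM * E11 * ccM * E22 * ccM = (0 :: 'k::comm_ring_1 R M)"
  unfolding mat_simps by (simp add: mult.assoc distrib_left distrib_right mult_minus_left mult_minus_right triple_zero M_zero)

lemma B_E11_E12: "tw (ccM * E11 * ccM) * E12 * ccM = (0 :: 'k::comm_ring_1 R M)"
  unfolding mat_simps by (simp add: mult.assoc distrib_left distrib_right mult_minus_left mult_minus_right triple_zero M_zero)

lemma B_E11_E21: "tw (ccM * E11 * ccM) * E21 * ccM = (0 :: 'k::comm_ring_1 R M)"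
  unfolding mat_simps by (simp add: mult.assoc distrib_left distrib_right mult_minus_left mult_minus_right triple_zero M_zero)

lemma B_E22_E11: "ccM * E22 * ccM * E11 * ccM = (0 :: 'k::comm_ring_1 R M)"
  unfolding mat_simps by (simp add: mult.assoc distrib_left distrib_right mult_minus_left mult_minus_right triple_zero M_zero)

lemma B_E22_E22: "ccM * E22 * ccM * E22 * ccM = (0 :: 'k::comm_ring_1 R M)"
  unfolding mat_simps by (simp add: mult.assoc distrib_left distrib_right mult_minus_left mult_minus_right triple_zero M_zero)

lemma B_E22_E12: "tw (ccM * E22 * ccM) * E12 * ccM = (0 :: 'k::comm_ring_1 R M)"
  unfolding mat_simps by (simp add: mult.assoc distrib_left distrib_right mult_minus_left mult_minus_right triple_zero M_zero)

lemma B_E22_E21: "tw (ccM * E22 * ccM) * E21 * ccM = (0 :: 'k::comm_ring_1 R M)"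
  unfolding mat_simps by (simp add: mult.assoc distrib_left distrib_right mult_minus_left mult_minus_right triple_zero M_zero)

lemma B_E12_E11: "tw ccM * E12 * ccM * E11 * ccM = (0 :: 'k::comm_ring_1 R M)"
  unfolding mat_simps by (simp add: mult.assoc distrib_left distrib_right mult_minus_left mult_minus_right triple_zero M_zero)

lemma B_E12_E22: "tw ccM * E12 * ccM * E22 * ccM = (0 :: 'k::comm_ring_1 R M)"
  unfolding mat_simps by (simp add: mult.assoc distrib_left distrib_right mult_minus_left mult_minus_right triple_zero M_zero)

lemma B_E12_E12: "tw1 (tw ccM * E12 * ccM) * E12 * ccM = (0 :: 'k::comm_ring_1 R M)"
  unfolding mat_simps by (simp add: mult.assoc distrib_left distrib_right mult_minus_left mult_minus_right triple_zero M_zero)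

lemma B_E12_E21: "tw1 (tw ccM * E12 * ccM) * E21 * ccM = (0 :: 'k::comm_ring_1 R M)"
  unfolding mat_simps by (simp add: mult.assoc distrib_left distrib_right mult_minus_left mult_minus_right triple_zero M_zero)

lemma B_E21_E11: "tw ccM * E21 * ccM * E11 * ccM = (0 :: 'k::comm_ring_1 R M)"
  unfolding mat_simps by (simp add: mult.assoc distrib_left distrib_right mult_minus_left mult_minus_right triple_zero M_zero)

lemma B_E21_E22: "tw ccM * E21 * ccM * E22 * ccM = (0 :: 'k::comm_ring_1 R M)"
  unfolding mat_simps by (simp add: mult.assoc distrib_left distrib_right mult_minus_left mult_minus_right triple_zero M_zero)

lemma B_E21_E12: "tw1 (tw ccM * E21 * ccM) * E12 * ccM = (0 :: 'k::comm_ring_1 R M)"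
  unfolding mat_simps by (simp add: mult.assoc distrib_left distrib_right mult_minus_left mult_minus_right triple_zero M_zero)

lemma B_E21_E21: "tw1 (tw ccM * E21 * ccM) * E21 * ccM = (0 :: 'k::comm_ring_1 R M)"
  unfolding mat_simps by (simp add: mult.assoc distrib_left distrib_right mult_minus_left mult_minus_right triple_zero M_zero)


definition M0 :: "'k::comm_ring_1 R M \<Rightarrow> bool" where
  "M0 A \<longleftrightarrow> evR (m11 A) \<and> odR (m12 A) \<and> odR (m21 A) \<and> evR (m22 A)"
definition M1 :: "'k::comm_ring_1 R M \<Rightarrow> bool" where
  "M1 A \<longleftrightarrow> odR (m11 A) \<and> evR (m12 A) \<and> evR (m21 A) \<and> odR (m22 A)"
definition scM :: "'k::comm_ring_1 R \<Rightarrow> 'k R M" where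
  "scM x = M x 0 0 x"

lemma M0_M [simp]: "M0 (M a b c d) \<longleftrightarrow> evR a \<and> odR b \<and> odR c \<and> evR d" by (simp add: M0_def)
lemma M1_M [simp]: "M1 (M a b c d) \<longleftrightarrow> odR a \<and> evR b \<and> evR c \<and> odR d" by (simp add: M1_def)

lemmas par_intros = evR_mult_ee evR_mult_oo odR_mult_eo odR_mult_oe evR_add odR_add
  evR_uminus odR_uminus evR_diff odR_diff evR_0 odR_0 evR_1 evR_xs odR_ys evR_kc

lemma M0_mult: "M0 A \<Longrightarrow> M0 B \<Longrightarrow> M0 (A * B)"
  by (cases A, cases B) (simp add: par_intros)
lemma M01_mult: "M0 A \<Longrightarrow> M1 B \<Longrightarrow> M1 (A * B)"
  by (cases A, cases B) (simp add: par_intros)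
lemma M10_mult: "M1 A \<Longrightarrow> M0 B \<Longrightarrow> M1 (A * B)"
  by (cases A, cases B) (simp add: par_intros)
lemma M0_add: "M0 A \<Longrightarrow> M0 B \<Longrightarrow> M0 (A + B)"
  by (cases A, cases B) (simp add: par_intros)
lemma M0_tw: "M0 A \<Longrightarrow> M0 (tw A)"
  by (cases A) (simp add: par_intros)
lemma M0_one: "M0 1" by (simp add: M_one par_intros)
lemma M0_zero: "M0 0" by (simp add: M_zero par_intros)

lemma evR_ee: "evR ee" unfolding ee_def by (simp add: par_intros)
lemma odR_pp: "odR pp" unfolding pp_def by (simp add: par_intros)
lemma odR_qq: "odR qq" unfolding qq_def by (simp add: par_intros)

lemma M0_ccM: "M0 ccM" by (simp add: ccM_def evR_ee odR_pp odR_qq)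
lemma M0_C1t: "M0 C1t" by (simp add: C1t_def par_intros)
lemma M0_C2t: "M0 C2t" by (simp add: C2t_def par_intros)
lemma M0_E11: "M0 E11" by (simp add: E11_def par_intros)
lemma M0_E22: "M0 E22" by (simp add: E22_def par_intros)
lemma M1_E12: "M1 E12" by (simp add: E12_def par_intros)
lemma M1_E21: "M1 E21" by (simp add: E21_def par_intros)

lemma ev_scM:
  assumes "evR x" shows "A * scM x = scM x * A"
proof (cases A)
  case (M a b c d)
  have "a * x = x * a" "b * x = x * b" "c * x = x * c" "d * x = x * d"
    using evR_comm[OF assms] by metis+
  then show ?thesis using M by (simp add: scM_def)
qed

lemma od_scM0:
  assumes "odR x" "M0 A" shows "A * scM x = scM x * tw A"
proof (cases A)
  case (M a b c d)
  then have p: "evR a" "odR b" "odR c" "evR d" using assms(2) by simp_all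
  have "a * x = x * a" "d * x = x * d" using evR_comm p by metis+
  moreover have "b * x = - (x * b)" "c * x = - (x * c)" using odR_anti assms(1) p by metis+
  ultimately show ?thesis using M by (simp add: scM_def)
qed

lemma od_scM1:
  assumes "odR x" "M1 A" shows "A * scM x = scM x * tw1 A"
proof (cases A)
  case (M a b c d)
  then have p: "odR a" "evR b" "evR c" "odR d" using assms(2) by simp_all
  have "b * x = x * b" "c * x = x * c" using evR_comm p by metis+
  moreover have "a * x = - (x * a)" "d * x = - (x * d)" using odR_anti assms(1) p by metis+
  ultimately show ?thesis using M by (simp add: scM_def)
qed

lemma M_split: "X = scM (m11 X) * E11 + scM (m12 X) * E12 + scM (m21 X) * E21 + scM (m22 X) * E22"
  by (cases X) (simp add: scM_def E11_def E12_def E21_def E22_def)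


lemma pull1:
  assumes c1: "ccM * scM x = scM x * G"
  shows "ccM * (scM x * E) * ccM = scM x * (G * E * ccM)"
proof -
  have "ccM * (scM x * E) * ccM = (ccM * scM x) * E * ccM" by (simp only: mult.assoc)
  also have "\<dots> = (scM x * G) * E * ccM" by (simp only: c1)
  also have "\<dots> = scM x * (G * E * ccM)" by (simp only: mult.assoc)
  finally show ?thesis .
qed

lemma pA_ev:
  assumes "evR x" "C * (ccM * E * ccM) = (ccM * E * ccM) * C"
  shows "C * (ccM * (scM x * E) * ccM) = (ccM * (scM x * E) * ccM) * C"
proof -
  have 1: "ccM * (scM x * E) * ccM = scM x * (ccM * E * ccM)"
    by (rule pull1, rule ev_scM[OF assms(1)])
  have c2: "C * scM x = scM x * C" by (rule ev_scM[OF assms(1)])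
  have "C * (scM x * (ccM * E * ccM)) = (C * scM x) * (ccM * E * ccM)" by (simp only: mult.assoc)
  also have "\<dots> = (scM x * C) * (ccM * E * ccM)" by (simp only: c2)
  also have "\<dots> = scM x * (C * (ccM * E * ccM))" by (simp only: mult.assoc)
  also have "\<dots> = scM x * ((ccM * E * ccM) * C)" by (simp only: assms(2))
  also have "\<dots> = (scM x * (ccM * E * ccM)) * C" by (simp only: mult.assoc)
  finally show ?thesis unfolding 1 .
qed

lemma pA_od:
  assumes "odR x" "M0 C" "tw C * (tw ccM * E * ccM) = (tw ccM * E * ccM) * C"
  shows "C * (ccM * (scM x * E) * ccM) = (ccM * (scM x * E) * ccM) * C"
proof -
  have 1: "ccM * (scM x * E) * ccM = scM x * (tw ccM * E * ccM)"
    by (rule pull1, rule od_scM0[OF assms(1) M0_ccM])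
  have c2: "C * scM x = scM x * tw C" by (rule od_scM0[OF assms(1,2)])
  have "C * (scM x * (tw ccM * E * ccM)) = (C * scM x) * (tw ccM * E * ccM)" by (simp only: mult.assoc)
  also have "\<dots> = (scM x * tw C) * (tw ccM * E * ccM)" by (simp only: c2)
  also have "\<dots> = scM x * (tw C * (tw ccM * E * ccM))" by (simp only: mult.assoc)
  also have "\<dots> = scM x * ((tw ccM * E * ccM) * C)" by (simp only: assms(3))
  also have "\<dots> = (scM x * (tw ccM * E * ccM)) * C" by (simp only: mult.assoc)
  finally show ?thesis unfolding 1 .
qed

lemma pB_gen:
  assumes c1: "ccM * scM x = scM x * G" and c2: "(G * E * ccM) * scM y = scM y * K"
    and z: "K * F * ccM = 0"
  shows "ccM * (scM x * E) * ccM * (scM y * F) * ccM = 0"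
proof -
  have "ccM * (scM x * E) * ccM * (scM y * F) * ccM = scM x * (G * E * ccM) * (scM y * F) * ccM"
    by (simp only: pull1[OF c1])
  also have "\<dots> = scM x * (((G * E * ccM) * scM y) * F * ccM)" by (simp only: mult.assoc)
  also have "\<dots> = scM x * ((scM y * K) * F * ccM)" by (simp only: c2)
  also have "\<dots> = scM x * scM y * (K * F * ccM)" by (simp only: mult.assoc)
  finally show ?thesis using z by simp
qed

lemma pB_ee:
  assumes "evR x" "evR y" "ccM * E * ccM * F * ccM = 0"
  shows "ccM * (scM x * E) * ccM * (scM y * F) * ccM = 0"
  by (rule pB_gen[OF ev_scM[OF assms(1)] ev_scM[OF assms(2)] assms(3)])

lemma pB_eo:
  assumes "evR x" "odR y" "M0 (ccM * E * ccM)" "tw (ccM * E * ccM) * F * ccM = 0"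
  shows "ccM * (scM x * E) * ccM * (scM y * F) * ccM = 0"
  by (rule pB_gen[OF ev_scM[OF assms(1)] od_scM0[OF assms(2,3)] assms(4)])

lemma pB_oe:
  assumes "odR x" "evR y" "tw ccM * E * ccM * F * ccM = 0"
  shows "ccM * (scM x * E) * ccM * (scM y * F) * ccM = 0"
  by (rule pB_gen[OF od_scM0[OF assms(1) M0_ccM] ev_scM[OF assms(2)] assms(3)])

lemma pB_oo:
  assumes "odR x" "odR y" "M1 (tw ccM * E * ccM)" "tw1 (tw ccM * E * ccM) * F * ccM = 0"
  shows "ccM * (scM x * E) * ccM * (scM y * F) * ccM = 0"
  by (rule pB_gen[OF od_scM0[OF assms(1) M0_ccM] od_scM1[OF assms(2,3)] assms(4)])

lemma M0_cEc: "M0 (ccM * E11 * ccM)" "M0 (ccM * E22 * ccM)"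
  by (intro M0_mult M0_ccM M0_E11 M0_E22)+
lemma M1_cEc: "M1 (tw ccM * E12 * ccM)" "M1 (tw ccM * E21 * ccM)"
  by (intro M10_mult M01_mult M0_tw M0_ccM M1_E12 M1_E21)+

lemma thmA:
  assumes X: "M0 X" and C: "C = C1t \<or> C = C2t"
  shows "C * (ccM * X * ccM) = (ccM * X * ccM) * C"
proof -
  have x: "evR (m11 X)" "odR (m12 X)" "odR (m21 X)" "evR (m22 X)" using X by (simp_all add: M0_def)
  have MC: "M0 C" using C M0_C1t M0_C2t by blast
  have a1: "C * (ccM * E11 * ccM) = (ccM * E11 * ccM) * C" using C A_C1t_E11 A_C2t_E11 by blast
  have a2: "tw C * (tw ccM * E12 * ccM) = (tw ccM * E12 * ccM) * C" using C A_C1t_E12 A_C2t_E12 by blast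
  have a3: "tw C * (tw ccM * E21 * ccM) = (tw ccM * E21 * ccM) * C" using C A_C1t_E21 A_C2t_E21 by blast
  have a4: "C * (ccM * E22 * ccM) = (ccM * E22 * ccM) * C" using C A_C1t_E22 A_C2t_E22 by blast
  note p1 = pA_ev[OF x(1) a1] and p2 = pA_od[OF x(2) MC a2] and p3 = pA_od[OF x(3) MC a3]
    and p4 = pA_ev[OF x(4) a4]
  have e: "ccM * X * ccM = ccM * (scM (m11 X) * E11) * ccM + ccM * (scM (m12 X) * E12) * ccM
     + ccM * (scM (m21 X) * E21) * ccM + ccM * (scM (m22 X) * E22) * ccM"
    by (subst M_split[of X]) (simp only: distrib_left distrib_right)
  show ?thesis unfolding e by (simp only: distrib_left distrib_right p1 p2 p3 p4)
qed

lemma thmB: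
  assumes X: "M0 X" and Y: "M0 Y"
  shows "ccM * X * ccM * Y * ccM = 0"
proof -
  have x: "evR (m11 X)" "odR (m12 X)" "odR (m21 X)" "evR (m22 X)" using X by (simp_all add: M0_def)
  have y: "evR (m11 Y)" "odR (m12 Y)" "odR (m21 Y)" "evR (m22 Y)" using Y by (simp_all add: M0_def)
  note z = pB_ee[OF x(1) y(1) B_E11_E11] pB_eo[OF x(1) y(2) M0_cEc(1) B_E11_E12]
    pB_eo[OF x(1) y(3) M0_cEc(1) B_E11_E21] pB_ee[OF x(1) y(4) B_E11_E22]
    pB_oe[OF x(2) y(1) B_E12_E11] pB_oo[OF x(2) y(2) M1_cEc(1) B_E12_E12]
    pB_oo[OF x(2) y(3) M1_cEc(1) B_E12_E21] pB_oe[OF x(2) y(4) B_E12_E22]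
    pB_oe[OF x(3) y(1) B_E21_E11] pB_oo[OF x(3) y(2) M1_cEc(2) B_E21_E12]
    pB_oo[OF x(3) y(3) M1_cEc(2) B_E21_E21] pB_oe[OF x(3) y(4) B_E21_E22]
    pB_ee[OF x(4) y(1) B_E22_E11] pB_eo[OF x(4) y(2) M0_cEc(2) B_E22_E12]
    pB_eo[OF x(4) y(3) M0_cEc(2) B_E22_E21] pB_ee[OF x(4) y(4) B_E22_E22]
  show ?thesis
    by (subst M_split[of X], subst M_split[of Y]) (simp only: distrib_left distrib_right z add_0_right)
qed


definition scal :: "'k::comm_ring_1 \<Rightarrow> 'k R M" where "scal c = scM (kc c)"

inductive_set FT :: "'k::comm_ring_1 R M set" where
  one: "1 \<in> FT"
| gen1: "C1t \<in> FT"
| gen2: "C2t \<in> FT"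
| smult: "A \<in> FT \<Longrightarrow> scal c * A \<in> FT"
| add: "A \<in> FT \<Longrightarrow> B \<in> FT \<Longrightarrow> A + B \<in> FT"
| mult: "A \<in> FT \<Longrightarrow> B \<in> FT \<Longrightarrow> A * B \<in> FT"

lemma scal_comm: "scal c * A = A * scal c"
  unfolding scal_def by (rule ev_scM[OF evR_kc, symmetric])

lemma M0_scal: "M0 (scal c)" by (simp add: scal_def scM_def par_intros)

lemma FT_M0: "A \<in> FT \<Longrightarrow> M0 A"
  by (induction rule: FT.induct) (auto intro: M0_one M0_C1t M0_C2t M0_mult M0_add M0_scal)

lemma kc_m1_mult: "kc (-1) * x = - x" by (rule kc_minus1)

lemma scal_m1: "scal (-1) * A = - A"
  by (cases A) (simp add: scal_def scM_def kc_m1_mult)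

lemma FT_neg: "A \<in> FT \<Longrightarrow> - A \<in> FT"
  using FT.smult[of A "-1"] by (simp add: scal_m1)

lemma FT_diff: "A \<in> FT \<Longrightarrow> B \<in> FT \<Longrightarrow> A - B \<in> FT"
  unfolding diff_conv_add_uminus by (intro FT.add FT_neg)

lemma FT_zero: "0 \<in> FT"
  using FT_diff[OF FT.one FT.one] by simp

lemma FT_pow: "A \<in> FT \<Longrightarrow> A ^ k \<in> FT"
  by (induction k) (auto intro: FT.one FT.mult)

lemma ccM_FT: "ccM \<in> FT"
  unfolding cc_eq[symmetric] by (intro FT_diff FT.mult FT.gen1 FT.gen2)

lemma comm_gen:
  assumes z1: "Z * C1t = C1t * Z" and z2: "Z * C2t = C2t * Z" and g: "G \<in> FT"
  shows "Z * G = G * Z"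
  using g
proof (induction rule: FT.induct)
  case one then show ?case by simp
next
  case gen1 then show ?case by (rule z1)
next
  case gen2 then show ?case by (rule z2)
next
  case (smult A c)
  have zs: "Z * scal c = scal c * Z" by (rule scal_comm[symmetric])
  have "Z * (scal c * A) = (Z * scal c) * A" by (simp only: mult.assoc)
  also have "\<dots> = (scal c * Z) * A" by (simp only: zs)
  also have "\<dots> = scal c * (Z * A)" by (simp only: mult.assoc)
  also have "\<dots> = scal c * A * Z" by (simp only: smult.IH mult.assoc)
  finally show ?case .
next
  case (add A B) then show ?case by (simp add: distrib_left distrib_right)
next
  case (mult A B)
  have "Z * (A * B) = (Z * A) * B" by (simp only: mult.assoc)
  also have "\<dots> = A * (Z * B)" by (simp only: mult.IH mult.assoc)
  also have "\<dots> = A * B * Z" by (simp only: mult.IH mult.assoc)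
  finally show ?case .
qed

inductive_set I1 :: "'k::comm_ring_1 R M set" where
  gen: "P \<in> FT \<Longrightarrow> Q \<in> FT \<Longrightarrow> P * ccM * Q \<in> I1"
| zero: "0 \<in> I1"
| add: "A \<in> I1 \<Longrightarrow> B \<in> I1 \<Longrightarrow> A + B \<in> I1"

lemma I1_FT: "A \<in> I1 \<Longrightarrow> A \<in> FT"
  by (induction rule: I1.induct) (auto intro: FT.mult FT.add FT_zero ccM_FT)

lemma I1_lmult: "A \<in> I1 \<Longrightarrow> G \<in> FT \<Longrightarrow> G * A \<in> I1"
proof (induction rule: I1.induct)
  case (gen P Q)
  then have "(G * P) * ccM * Q \<in> I1" by (intro I1.gen FT.mult)
  then show ?case by (simp add: mult.assoc)
qed (auto simp: distrib_left intro: I1.zero I1.add)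

lemma I1_rmult: "A \<in> I1 \<Longrightarrow> G \<in> FT \<Longrightarrow> A * G \<in> I1"
proof (induction rule: I1.induct)
  case (gen P Q)
  then have "P * ccM * (Q * G) \<in> I1" by (intro I1.gen FT.mult)
  then show ?case by (simp add: mult.assoc)
qed (auto simp: distrib_right intro: I1.zero I1.add)

lemma I1_neg: "A \<in> I1 \<Longrightarrow> - A \<in> I1"
  using I1_lmult[OF _ FT_neg[OF FT.one]] by simp

lemma I1_diff: "A \<in> I1 \<Longrightarrow> B \<in> I1 \<Longrightarrow> A - B \<in> I1"
  unfolding diff_conv_add_uminus by (intro I1.add I1_neg)

lemma ccM_I1: "ccM \<in> I1"
  using I1.gen[OF FT.one FT.one] by simp

lemma comm_I1_gen:
  assumes G: "G = C1t \<or> G = C2t" and T: "T \<in> FT"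
  shows "G * T - T * G \<in> I1"
  using T
proof (induction rule: FT.induct)
  case one then show ?case by (simp add: I1.zero)
next
  case gen1
  show ?case
  proof (cases "G = C1t")
    case True then show ?thesis by (simp add: I1.zero)
  next
    case False
    then have "G = C2t" using G by simp
    then show ?thesis using I1_neg[OF ccM_I1] cc_eq by (metis minus_diff_eq)
  qed
next
  case gen2
  show ?case
  proof (cases "G = C1t")
    case True then show ?thesis using ccM_I1 by (simp only: True cc_eq)
  next
    case False
    then have "G = C2t" using G by simp
    then show ?thesis by (simp add: I1.zero)
  qed
next
  case (smult A c)
  have "G * (scal c * A) - scal c * A * G = scal c * (G * A - A * G)"
    by (simp add: scal_comm[of c G] algebra_simps) (simp add: mult.assoc[symmetric] scal_comm[of c G])
  then show ?case using I1_lmult[OF smult.IH FT.smult[OF FT.one, of c]] by simp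
next
  case (add A B)
  have "G * (A + B) - (A + B) * G = (G * A - A * G) + (G * B - B * G)"
    by (simp add: algebra_simps)
  then show ?case using add.IH by (simp add: I1.add)
next
  case (mult A B)
  have "G * (A * B) - A * B * G = (G * A - A * G) * B + A * (G * B - B * G)"
    by (simp add: algebra_simps)
  then show ?case using mult I1_rmult I1_lmult I1.add by metis
qed

lemma comm_I1:
  assumes G: "G \<in> FT" and T: "T \<in> FT"
  shows "G * T - T * G \<in> I1"
  using G
proof (induction rule: FT.induct)
  case one then show ?case by (simp add: I1.zero)
next
  case gen1 then show ?case using comm_I1_gen T by blast
next
  case gen2 then show ?case using comm_I1_gen T by blast
next
  case (smult A c)
  have "scal c * A * T - T * (scal c * A) = scal c * (A * T - T * A)"
    by (simp add: algebra_simps) (simp add: mult.assoc[symmetric] scal_comm[of c T])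
  then show ?case using I1_lmult[OF smult.IH FT.smult[OF FT.one, of c]] by simp
next
  case (add A B)
  have "(A + B) * T - T * (A + B) = (A * T - T * A) + (B * T - T * B)"
    by (simp add: algebra_simps)
  then show ?case using add.IH by (simp add: I1.add)
next
  case (mult A B)
  have "A * B * T - T * (A * B) = A * (B * T - T * B) + (A * T - T * A) * B"
    by (simp add: algebra_simps)
  then show ?case using mult I1_rmult I1_lmult I1.add by metis
qed

inductive_set I2 :: "'k::comm_ring_1 R M set" where
  gen: "P \<in> FT \<Longrightarrow> Q \<in> FT \<Longrightarrow> S \<in> FT \<Longrightarrow> P * ccM * Q * ccM * S \<in> I2"
| zero: "0 \<in> I2"
| add: "A \<in> I2 \<Longrightarrow> B \<in> I2 \<Longrightarrow> A + B \<in> I2"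

lemma I2_I1: "A \<in> I2 \<Longrightarrow> A \<in> I1"
proof (induction rule: I2.induct)
  case (gen P Q S)
  then have "P * ccM * (Q * ccM * S) \<in> I1" by (intro I1.gen FT.mult ccM_FT)
  then show ?case by (simp add: mult.assoc)
qed (auto intro: I1.zero I1.add)

lemma I2_lmult: "A \<in> I2 \<Longrightarrow> G \<in> FT \<Longrightarrow> G * A \<in> I2"
proof (induction rule: I2.induct)
  case (gen P Q S)
  then have "(G * P) * ccM * Q * ccM * S \<in> I2" by (intro I2.gen FT.mult)
  then show ?case by (simp add: mult.assoc)
qed (auto simp: distrib_left intro: I2.zero I2.add)

lemma I2_rmult: "A \<in> I2 \<Longrightarrow> G \<in> FT \<Longrightarrow> A * G \<in> I2"
proof (induction rule: I2.induct)
  case (gen P Q S)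
  then have "P * ccM * Q * ccM * (S * G) \<in> I2" by (intro I2.gen FT.mult)
  then show ?case by (simp add: mult.assoc)
qed (auto simp: distrib_right intro: I2.zero I2.add)

lemma I1_I1_gen:
  assumes "B \<in> I1" "P \<in> FT" "Q \<in> FT" shows "P * ccM * Q * B \<in> I2"
  using assms
proof (induction B rule: I1.induct)
  case (gen P' Q')
  then have "P * ccM * (Q * P') * ccM * Q' \<in> I2" by (intro I2.gen FT.mult)
  then show ?case by (simp add: mult.assoc)
qed (auto simp: distrib_left intro: I2.zero I2.add)

lemma I1_I1: "A \<in> I1 \<Longrightarrow> B \<in> I1 \<Longrightarrow> A * B \<in> I2"
proof (induction rule: I1.induct)
  case (gen P Q) then show ?case using I1_I1_gen by blast
qed (auto simp: distrib_right intro: I2.zero I2.add)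

lemma Z_kills_I1:
  assumes Q: "Q \<in> FT" and W: "W \<in> I1"
  shows "(ccM * Q * ccM) * W = 0"
  using W
proof (induction rule: I1.induct)
  case (gen P' Q')
  have "ccM * Q * ccM * (P' * ccM * Q') = (ccM * Q * ccM * P' * ccM) * Q'"
    by (simp only: mult.assoc)
  also have "\<dots> = 0" using thmB[OF FT_M0[OF Q] FT_M0[OF gen(1)]] by simp
  finally show ?case .
qed (auto simp: distrib_left)

lemma Z_comm:
  assumes Q: "Q \<in> FT" and G: "G \<in> FT"
  shows "(ccM * Q * ccM) * G = G * (ccM * Q * ccM)"
proof (rule comm_gen[OF _ _ G])
  show "ccM * Q * ccM * C1t = C1t * (ccM * Q * ccM)"
    using thmA[OF FT_M0[OF Q], of C1t] by simp
  show "ccM * Q * ccM * C2t = C2t * (ccM * Q * ccM)"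
    using thmA[OF FT_M0[OF Q], of C2t] by simp
qed

lemma I2_central: "A \<in> I2 \<Longrightarrow> G \<in> FT \<Longrightarrow> A * G = G * A"
proof (induction rule: I2.induct)
  case (gen P Q S)
  define Z where "Z = ccM * Q * ccM"
  have e: "P * ccM * Q * ccM * S = Z * (P * S)"
  proof -
    have "P * ccM * Q * ccM * S = P * Z * S" by (simp add: Z_def mult.assoc)
    also have "\<dots> = Z * P * S" using Z_comm[OF gen(2) gen(1)] by (simp add: Z_def)
    finally show ?thesis by (simp add: mult.assoc)
  qed
  have PS: "P * S \<in> FT" using gen by (intro FT.mult)
  have "Z * (G * (P * S) - (P * S) * G) = 0"
    unfolding Z_def by (rule Z_kills_I1[OF gen(2) comm_I1[OF gen(4) PS]])
  then have "Z * (G * (P * S)) = Z * ((P * S) * G)" by (simp add: right_diff_distrib)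
  moreover have "Z * (G * (P * S)) = G * (Z * (P * S))"
    using Z_comm[OF gen(2) gen(4)] by (simp add: Z_def mult.assoc[symmetric])
  ultimately show ?case unfolding e by (simp add: mult.assoc)
qed (auto simp: distrib_left distrib_right)

definition CgenT :: "nat \<Rightarrow> 'k::comm_ring_1 R M" where
  "CgenT j = (if j = 1 then C1t else C2t)"

definition lncT :: "nat list \<Rightarrow> 'k::comm_ring_1 R M" where
  "lncT js = foldl (\<lambda>A j. A * CgenT j - CgenT j * A) ccM js"

lemma CgenT_FT: "CgenT j \<in> FT" by (simp add: CgenT_def FT.gen1 FT.gen2)

lemma foldl_I1: "A \<in> I1 \<Longrightarrow> foldl (\<lambda>A j. A * CgenT j - CgenT j * A) A js \<in> I1"
proof (induction js arbitrary: A)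
  case Nil then show ?case by simp
next
  case (Cons j js)
  have "A * CgenT j - CgenT j * A \<in> I1"
    using Cons.prems CgenT_FT I1_lmult I1_rmult I1_diff by blast
  then show ?case using Cons.IH by simp
qed

lemma lncT_I1: "lncT js \<in> I1"
  unfolding lncT_def by (rule foldl_I1[OF ccM_I1])

definition prodT :: "(nat list \<times> nat) list \<Rightarrow> 'k::comm_ring_1 R M" where
  "prodT us = foldr (*) (map (\<lambda>(js, k). lncT js ^ k) us) 1"

lemma pow_levels:
  fixes x :: "'k::comm_ring_1 R M"
  assumes "x \<in> I1"
  shows "x ^ k \<in> FT \<and> (1 \<le> k \<longrightarrow> x ^ k \<in> I1) \<and> (2 \<le> k \<longrightarrow> x ^ k \<in> I2)"
proof -
  have xF: "x \<in> FT" using I1_FT assms by blast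
  have F: "x ^ k \<in> FT" using FT_pow[OF xF] .
  have 1: "1 \<le> k \<longrightarrow> x ^ k \<in> I1"
  proof
    assume "1 \<le> k"
    then obtain j where "k = Suc j" by (cases k) auto
    then show "x ^ k \<in> I1" using I1_rmult[OF assms FT_pow[OF xF, of j]] by simp
  qed
  have 2: "2 \<le> k \<longrightarrow> x ^ k \<in> I2"
  proof
    assume "2 \<le> k"
    then obtain j where "k = Suc (Suc j)" by (metis add_2_eq_Suc le_Suc_ex)
    then have "x ^ k = x * (x * x ^ j)" by simp
    moreover have "x * x ^ j \<in> I1" using I1_rmult[OF assms FT_pow[OF xF, of j]] .
    ultimately show "x ^ k \<in> I2" using I1_I1[OF assms] by simp
  qed
  show ?thesis using F 1 2 by blast
qed

lemma prodT_levels: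
  "(prodT us :: 'k::comm_ring_1 R M) \<in> FT \<and> (1 \<le> sum_list (map snd us) \<longrightarrow> (prodT us :: 'k R M) \<in> I1)
     \<and> (2 \<le> sum_list (map snd us) \<longrightarrow> (prodT us :: 'k R M) \<in> I2)"
proof (induction us)
  case Nil then show ?case by (simp add: prodT_def FT.one)
next
  case (Cons u us)
  obtain js k where u: "u = (js, k)" by (cases u)
  let ?x = "lncT js ^ k :: 'k R M" and ?y = "prodT us :: 'k R M" and ?r = "sum_list (map snd us)"
  have e: "(prodT (u # us) :: 'k R M) = ?x * ?y" using u by (simp add: prodT_def)
  have s: "sum_list (map snd (u # us)) = k + ?r" using u by simp
  have x: "?x \<in> FT" "1 \<le> k \<longrightarrow> ?x \<in> I1" "2 \<le> k \<longrightarrow> ?x \<in> I2"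
    using pow_levels[OF lncT_I1[of js], of k] by auto
  have y: "?y \<in> FT" "1 \<le> ?r \<longrightarrow> ?y \<in> I1" "2 \<le> ?r \<longrightarrow> ?y \<in> I2" using Cons.IH by auto
  have F: "?x * ?y \<in> FT" using x y FT.mult by blast
  have L1: "1 \<le> k + ?r \<longrightarrow> ?x * ?y \<in> I1"
    using x y I1_rmult I1_lmult by (metis add_is_0 less_one not_le)
  have L2: "2 \<le> k + ?r \<longrightarrow> ?x * ?y \<in> I2"
  proof
    assume h: "2 \<le> k + ?r"
    consider "2 \<le> k" | "2 \<le> ?r" | "1 \<le> k \<and> 1 \<le> ?r" using h by linarith
    then show "?x * ?y \<in> I2"
      by cases (use x y I2_rmult I2_lmult I1_I1 in blast)+
  qed
  show ?case unfolding e s using F L1 L2 by blast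
qed


definition niceM :: "'k::comm_ring_1 mat2 \<Rightarrow> bool" where
  "niceM A \<longleftrightarrow> (\<forall>i j. nice (A i j))"

definition toM :: "'k::comm_ring_1 mat2 \<Rightarrow> 'k R M" where
  "toM A = M (Abs_R (A False False)) (Abs_R (A False True)) (Abs_R (A True False)) (Abs_R (A True True))"

lemma Abs_mult: "nice a \<Longrightarrow> nice b \<Longrightarrow> Abs_R (sc_mult a b) = Abs_R a * Abs_R b"
  by (metis Abs_R_inverse mem_Collect_eq Rep_R_inverse times_R.rep_eq)
lemma Abs_add: "nice a \<Longrightarrow> nice b \<Longrightarrow> Abs_R (sc_add a b) = Abs_R a + Abs_R b"
  by (metis Abs_R_inverse mem_Collect_eq Rep_R_inverse plus_R.rep_eq)
lemma Abs_smult: "nice a \<Longrightarrow> Abs_R (sc_smult c a) = kc c * Abs_R a"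
  by (metis Abs_R_inverse mem_Collect_eq Rep_R_inverse Rep_kc_mult)
lemma Abs_zero: "Abs_R (\<lambda>_. 0) = 0"
  by (simp add: zero_R_def)
lemma Abs_one: "Abs_R sc_one = 1"
  by (simp add: one_R_def)
lemma Abs_xv: "Abs_R (xv i) = xs i" by (simp add: xs_def)
lemma Abs_yv: "Abs_R (yv i) = ys i" by (simp add: ys_def)

lemma niceM_mmult: "niceM A \<Longrightarrow> niceM B \<Longrightarrow> niceM (mmult A B)"
  by (simp add: niceM_def mmult_def nice_add nice_mult)
lemma niceM_madd: "niceM A \<Longrightarrow> niceM B \<Longrightarrow> niceM (madd A B)"
  by (simp add: niceM_def madd_def nice_add)
lemma niceM_msmult: "niceM A \<Longrightarrow> niceM (msmult c A)"
  by (simp add: niceM_def msmult_def nice_smult)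
lemma niceM_mone: "niceM mone"
  by (simp add: niceM_def mone_def nice_one nice_zero)
lemma niceM_C1: "niceM C1"
  by (simp add: niceM_def C1_def nice_xv nice_yv)
lemma niceM_C2: "niceM C2"
  by (simp add: niceM_def C2_def nice_xv nice_yv)

lemma toM_mmult: "niceM A \<Longrightarrow> niceM B \<Longrightarrow> toM (mmult A B) = toM A * toM B"
  by (simp add: niceM_def toM_def mmult_def Abs_add Abs_mult nice_mult)
lemma toM_madd: "niceM A \<Longrightarrow> niceM B \<Longrightarrow> toM (madd A B) = toM A + toM B"
  by (simp add: niceM_def toM_def madd_def Abs_add)
lemma toM_msmult: "niceM A \<Longrightarrow> toM (msmult c A) = scal c * toM A"
  by (simp add: niceM_def toM_def msmult_def Abs_smult scal_def scM_def)
lemma toM_mone: "toM mone = 1"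
  by (simp add: toM_def mone_def Abs_one Abs_zero M_one)
lemma toM_C1: "toM C1 = C1t"
  by (simp add: toM_def C1_def C1t_def Abs_xv Abs_yv)
lemma toM_C2: "toM C2 = C2t"
  by (simp add: toM_def C2_def C2t_def Abs_xv Abs_yv)

lemma toM_inj:
  assumes "niceM A" "niceM B" "toM A = toM B" shows "A = B"
proof -
  have "Abs_R (A i j) = Abs_R (B i j)" for i j
    using assms(3) by (cases i; cases j) (simp_all add: toM_def)
  then have "A i j = B i j" for i j
    using assms(1,2) by (metis Abs_R_inverse mem_Collect_eq niceM_def)
  then show ?thesis by (simp add: fun_eq_iff)
qed

lemma Falg_toM: "A \<in> Falg \<Longrightarrow> niceM A \<and> toM A \<in> FT"
  by (induction rule: Falg.induct)
     (auto simp: toM_mone toM_C1 toM_C2 toM_msmult toM_madd toM_mmult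
       intro: niceM_mone niceM_C1 niceM_C2 niceM_msmult niceM_madd niceM_mmult
         FT.one FT.gen1 FT.gen2 FT.smult FT.add FT.mult)

lemma mpow_Falg: "A \<in> Falg \<Longrightarrow> mpow A k \<in> Falg"
  by (induction k) (auto intro: Falg.one Falg.mult)

lemma toM_mpow: "niceM A \<Longrightarrow> niceM (mpow A k) \<and> toM (mpow A k) = toM A ^ k"
  by (induction k) (simp_all add: niceM_mone toM_mone niceM_mmult toM_mmult power_commutes)

lemma mcomm_Falg: "A \<in> Falg \<Longrightarrow> B \<in> Falg \<Longrightarrow> mcomm A B \<in> Falg"
  by (simp add: mcomm_def Falg.add Falg.smult Falg.mult)

lemma toM_mcomm: "niceM A \<Longrightarrow> niceM B \<Longrightarrow> niceM (mcomm A B) \<and> toM (mcomm A B) = toM A * toM B - toM B * toM A"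
  by (simp add: mcomm_def niceM_madd niceM_msmult niceM_mmult toM_madd toM_msmult toM_mmult scal_m1)

lemma Cgen_Falg: "Cgen j \<in> Falg" by (simp add: Cgen_def Falg.gen1 Falg.gen2)
lemma toM_Cgen: "niceM (Cgen j) \<and> toM (Cgen j) = CgenT j"
  by (simp add: Cgen_def CgenT_def niceM_C1 niceM_C2 toM_C1 toM_C2)

lemma lnc_foldl:
  assumes "A \<in> Falg"
  shows "foldl (\<lambda>A j. mcomm A (Cgen j)) A js \<in> Falg \<and>
     toM (foldl (\<lambda>A j. mcomm A (Cgen j)) A js) = foldl (\<lambda>A j. A * CgenT j - CgenT j * A) (toM A) js"
  using assms
proof (induction js arbitrary: A)
  case Nil then show ?case by simp
next
  case (Cons j js)
  have n: "niceM A" using Falg_toM Cons.prems by blast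
  have "mcomm A (Cgen j) \<in> Falg" using Cons.prems Cgen_Falg mcomm_Falg by blast
  moreover have "toM (mcomm A (Cgen j)) = toM A * CgenT j - CgenT j * toM A"
  proof -
    have tg: "niceM (Cgen j :: 'a mat2)" "toM (Cgen j :: 'a mat2) = CgenT j" using toM_Cgen by auto
    show ?thesis using toM_mcomm[OF n tg(1)] tg(2) by simp
  qed
  ultimately show ?case using Cons.IH by simp
qed

lemma lncomm_Falg: "(lncomm js :: 'k::comm_ring_1 mat2) \<in> Falg \<and> toM (lncomm js :: 'k mat2) = lncT js"
proof -
  have c: "(mcomm C1 C2 :: 'k mat2) \<in> Falg" by (rule mcomm_Falg[OF Falg.gen1 Falg.gen2])
  have n1: "niceM (C1 :: 'k mat2)" by (rule niceM_C1)
  have n2: "niceM (C2 :: 'k mat2)" by (rule niceM_C2)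
  have "toM (mcomm C1 C2 :: 'k mat2) = C1t * C2t - C2t * C1t"
    using toM_mcomm[OF n1 n2] by (simp add: toM_C1 toM_C2)
  then have t: "toM (mcomm C1 C2 :: 'k mat2) = ccM" by (simp only: cc_eq)
  show ?thesis using lnc_foldl[OF c, of js] by (simp add: lncomm_def lncT_def t)
qed

lemma mprod_Falg: "(\<forall>A \<in> set As. A \<in> Falg) \<Longrightarrow> mprod As \<in> Falg \<and> toM (mprod As) = foldr (*) (map toM As) 1"
proof (induction As)
  case Nil then show ?case by (simp add: mprod_def Falg.one toM_mone)
next
  case (Cons A As)
  then have IH: "mprod As \<in> Falg" "toM (mprod As) = foldr (*) (map toM As) 1" by auto
  have a: "A \<in> Falg" using Cons.prems by simp
  have "mprod (A # As) = mmult A (mprod As)" by (simp add: mprod_def)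
  moreover have "toM (mmult A (mprod As)) = toM A * toM (mprod As)"
    using Falg_toM[OF a] Falg_toM[OF IH(1)] toM_mmult by blast
  ultimately show ?case using IH a Falg.mult by simp
qed

lemma fmono_Falg:
  "(fmono n m us :: 'k::comm_ring_1 mat2) \<in> Falg \<and> toM (fmono n m us :: 'k mat2) = C1t ^ n * (C2t ^ m * prodT us)"
proof -
  let ?L = "map (\<lambda>(js, k). mpow (lncomm js) k) us :: 'k mat2 list"
  have L: "\<forall>A \<in> set ?L. A \<in> Falg" using lncomm_Falg mpow_Falg by auto
  have m: "map toM ?L = map (\<lambda>(js, k). lncT js ^ k) us"
  proof -
    have "toM (mpow (lncomm js :: 'k mat2) k) = lncT js ^ k" for js k
    proof -
      have l: "(lncomm js :: 'k mat2) \<in> Falg" "toM (lncomm js :: 'k mat2) = lncT js"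
        using lncomm_Falg by auto
      have nl: "niceM (lncomm js :: 'k mat2)" using Falg_toM[OF l(1)] by simp
      show ?thesis using toM_mpow[OF nl, of k] l(2) by simp
    qed
    then show ?thesis by (auto simp: split_def)
  qed
  have P0: "mprod ?L \<in> Falg \<and> toM (mprod ?L) = foldr (*) (map toM ?L) 1" by (rule mprod_Falg[OF L])
  have P: "mprod ?L \<in> Falg" "toM (mprod ?L) = (prodT us :: 'k R M)"
    using P0 unfolding m prodT_def by auto
  have n1: "niceM (C1 :: 'k mat2)" by (rule niceM_C1)
  have n2: "niceM (C2 :: 'k mat2)" by (rule niceM_C2)
  have t1: "toM (C1 :: 'k mat2) = C1t" by (rule toM_C1)
  have t2: "toM (C2 :: 'k mat2) = C2t" by (rule toM_C2)
  have p1: "mpow (C1 :: 'k mat2) n \<in> Falg" "toM (mpow (C1 :: 'k mat2) n) = C1t ^ n"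
    using mpow_Falg[OF Falg.gen1] toM_mpow[OF n1, of n] t1 by auto
  have p2: "mpow (C2 :: 'k mat2) m \<in> Falg" "toM (mpow (C2 :: 'k mat2) m) = C2t ^ m"
    using mpow_Falg[OF Falg.gen2] toM_mpow[OF n2, of m] t2 by auto
  have i: "mmult (mpow C2 m) (mprod ?L) \<in> Falg" using p2 P Falg.mult by blast
  have t: "toM (mmult (mpow C2 m) (mprod ?L)) = C2t ^ m * prodT us"
    using p2 P Falg_toM toM_mmult by metis
  show ?thesis unfolding fmono_def
    using Falg.mult[OF p1(1) i] toM_mmult[of "mpow C1 n" "mmult (mpow C2 m) (mprod ?L)"]
      Falg_toM[OF p1(1)] Falg_toM[OF i] p1(2) t by simp
qed


definition reg :: "(nat \<Rightarrow> nat) \<times> nat set \<Rightarrow> bool" where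
  "reg mo \<longleftrightarrow> fst mo 2 = 0 \<and> fst mo 3 = 0 \<and> snd mo \<subseteq> {0}"

definition pis :: "'k::comm_ring_1 sc \<Rightarrow> 'k sc" where
  "pis f = (\<lambda>mo. if reg mo then f mo else 0)"

lemma nice_pis: "nice f \<Longrightarrow> nice (pis f)"
  unfolding nice_def pis_def by auto

lemma pis_mult: "sc_mult (pis f) (pis g) = pis (sc_mult f g)"
proof (rule ext, clarify)
  fix a S
  show "sc_mult (pis f) (pis g) (a, S) = pis (sc_mult f g) (a, S)"
  proof (cases "reg (a, S)")
    case True
    show ?thesis unfolding sc_mult_eq2 pis_def using True
    proof (simp, intro sum.cong refl)
      fix x assume "x \<in> Dset a S"
      then obtain b T where x: "x = (b, T)" "b \<le> a" "T \<subseteq> S" by (auto simp: Dset_def)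
      have "reg x" "reg (fsub a (fst x), S - snd x)"
        using True x by (auto simp: reg_def fsub_def le_fun_def) (metis le_zero_eq)+
      then show "gsign (snd x) (S - snd x) * (if reg x then f x else 0) *
           (if reg (fsub a (fst x), S - snd x) then g (fsub a (fst x), S - snd x) else 0) =
         gsign (snd x) (S - snd x) * f x * g (fsub a (fst x), S - snd x)" by simp
    qed
  next
    case False
    have "sc_mult (pis f) (pis g) (a, S) = (\<Sum>x \<in> Dset a S. 0)"
      unfolding sc_mult_eq2
    proof (rule sum.cong[OF refl])
      fix x assume "x \<in> Dset a S"
      then obtain b T where x: "x = (b, T)" "b \<le> a" "T \<subseteq> S" by (auto simp: Dset_def)
      have "\<not> reg x \<or> \<not> reg (fsub a (fst x), S - snd x)"
      proof (rule ccontr)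
        assume "\<not> ?thesis"
        then have r: "b 2 = 0" "b 3 = 0" "T \<subseteq> {0}" "a 2 - b 2 = 0" "a 3 - b 3 = 0" "S - T \<subseteq> {0}"
          using x by (auto simp: reg_def fsub_def)
        then have "reg (a, S)" by (auto simp: reg_def)
        then show False using False by simp
      qed
      then show "gsign (snd x) (S - snd x) * pis f x * pis g (fsub a (fst x), S - snd x) = 0"
        by (auto simp: pis_def)
    qed
    then show ?thesis using False by (simp add: pis_def)
  qed
qed

lift_definition piR :: "'k::comm_ring_1 R \<Rightarrow> 'k R" is pis by (rule nice_pis)

lemma piR_mult: "piR (x * y) = piR x * piR y"
  by transfer (simp add: pis_mult)
lemma piR_add: "piR (x + y) = piR x + piR y"
  by transfer (simp add: pis_def sc_add_def fun_eq_iff)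
lemma piR_uminus: "piR (- x) = - piR x"
  by transfer (simp add: pis_def sc_smult_def fun_eq_iff)
lemma piR_diff: "piR (x - y) = piR x - piR y"
  unfolding diff_conv_add_uminus by (simp only: piR_add piR_uminus)
lemma piR_zero: "piR 0 = 0"
  by transfer (simp add: pis_def fun_eq_iff)
lemma piR_one: "piR 1 = 1"
  by transfer (auto simp: pis_def sc_one_def fun_eq_iff reg_def)
lemma piR_x0: "piR (xs 0) = xs 0"
  by transfer (auto simp: pis_def xv_def fun_eq_iff reg_def)
lemma piR_x1: "piR (xs (Suc 0)) = xs (Suc 0)"
  by transfer (auto simp: pis_def xv_def fun_eq_iff reg_def)
lemma piR_x2: "piR (xs 2) = 0"
  by transfer (auto simp: pis_def xv_def fun_eq_iff reg_def)
lemma piR_x3: "piR (xs 3) = 0"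
  by transfer (auto simp: pis_def xv_def fun_eq_iff reg_def)
lemma piR_y0: "piR (ys 0) = ys 0"
  by transfer (auto simp: pis_def yv_def fun_eq_iff reg_def)
lemma piR_yi: "i \<noteq> 0 \<Longrightarrow> piR (ys i) = 0"
  by transfer (auto simp: pis_def yv_def fun_eq_iff reg_def)

definition piM :: "'k::comm_ring_1 R M \<Rightarrow> 'k R M" where
  "piM A = M (piR (m11 A)) (piR (m12 A)) (piR (m21 A)) (piR (m22 A))"

lemma piM_M [simp]: "piM (M a b c d) = M (piR a) (piR b) (piR c) (piR d)"
  by (simp add: piM_def)
lemma piM_mult: "piM (A * B) = piM A * piM B"
  by (cases A, cases B) (simp add: piR_mult piR_add)
lemma piM_diff: "piM (A - B) = piM A - piM B"
  by (cases A, cases B) (simp add: piR_diff)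
lemma piM_one: "piM 1 = 1"
  by (simp add: M_one piR_one piR_zero)
lemma piM_pow: "piM (A ^ k) = piM A ^ k"
  by (induction k) (simp_all add: piM_one piM_mult)

abbreviation "P1 \<equiv> M (xs 0) (ys 0) 0 0 :: 'k::comm_ring_1 R M"
abbreviation "P2 \<equiv> M (xs (Suc 0)) 0 0 0 :: 'k::comm_ring_1 R M"

lemma piM_C1t: "piM C1t = P1"
  by (simp add: C1t_def piR_x0 piR_x2 piR_y0 piR_yi)
lemma piM_C2t: "piM C2t = P2"
  by (simp add: C2t_def piR_x1 piR_x3 piR_yi)

definition expo :: "nat \<Rightarrow> nat \<Rightarrow> nat \<Rightarrow> nat" where
  "expo k i = (\<lambda>x. if x = k then i else 0)"

definition ismonX :: "'k::comm_ring_1 R \<Rightarrow> bool" where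
  "ismonX x \<longleftrightarrow> (\<exists>a. fin_mono (a, {}) \<and> Rep_R x = mnm a {} 1)"

lemma ismonX_1: "ismonX 1"
  unfolding ismonX_def
  by (rule exI[of _ "\<lambda>_. 0"]) (auto simp: fin_mono_def one_R.rep_eq sc_one_def mnm_def fun_eq_iff)

lemma ismonX_xs: "ismonX (xs k)"
  unfolding ismonX_def
  by (rule exI[of _ "(\<lambda>_. 0)(k := 1)"]) (auto simp: fin_mono_def xs.rep_eq xv_mnm)

lemma fin_mono_fadd: "fin_mono (a, S) \<Longrightarrow> fin_mono (b, T) \<Longrightarrow> fin_mono (fadd a b, S \<union> T)"
proof -
  assume "fin_mono (a, S)" "fin_mono (b, T)"
  moreover have "{i. fadd a b i \<noteq> 0} \<subseteq> {i. a i \<noteq> 0} \<union> {i. b i \<noteq> 0}" by (auto simp: fadd_def)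
  ultimately show ?thesis by (auto simp: fin_mono_def intro: finite_subset)
qed

lemma ismonX_mult: "ismonX x \<Longrightarrow> ismonX y \<Longrightarrow> ismonX (x * y)"
proof -
  assume "ismonX x" "ismonX y"
  then obtain a b where a: "fin_mono (a, {})" "Rep_R x = mnm a {} 1"
    and b: "fin_mono (b, {})" "Rep_R y = mnm b {} 1" by (auto simp: ismonX_def)
  have "Rep_R (x * y) = mnm (fadd a b) {} 1"
    using a b by (simp add: times_R.rep_eq mono_mult)
  moreover have "fin_mono (fadd a b, {})" using fin_mono_fadd[OF a(1) b(1)] by simp
  ultimately show ?thesis unfolding ismonX_def by blast
qed

lemma ismonX_pow: "ismonX x \<Longrightarrow> ismonX (x ^ k)"
  by (induction k) (simp_all add: ismonX_1 ismonX_mult)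

lemma ismonX_nz: "ismonX x \<Longrightarrow> x * ys 0 \<noteq> 0"
proof
  assume "ismonX x" and z: "x * ys 0 = 0"
  then obtain a where a: "fin_mono (a, {})" "Rep_R x = mnm a {} 1" by (auto simp: ismonX_def)
  have f0: "fin_mono (\<lambda>_. 0, {0})" by (simp add: fin_mono_def)
  have "Rep_R (x * ys 0) = mnm (fadd a (\<lambda>_. 0)) {0} 1"
    using a f0 by (simp add: times_R.rep_eq ys.rep_eq yv_mnm mono_mult)
  then have "Rep_R (x * ys 0) (fadd a (\<lambda>_. 0), {0}) = 1" by (simp add: mnm_def)
  moreover have "Rep_R (0 :: 'a R) (fadd a (\<lambda>_. 0), {0}) = 0" by (simp add: zero_R.rep_eq)
  ultimately show False using z by simp
qed

definition Wm :: "'k::comm_ring_1 R \<Rightarrow> bool" where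
  "Wm w \<longleftrightarrow> (\<exists>m. ismonX m \<and> (w = m \<or> w = - m))"

lemma Wm_nz: "Wm w \<Longrightarrow> w * ys 0 \<noteq> 0"
  unfolding Wm_def using ismonX_nz by (metis minus_mult_left neg_equal_0_iff_equal)

lemma Wm_neg: "Wm w \<Longrightarrow> Wm (- w)"
  unfolding Wm_def by (metis minus_minus)

lemma Wm_lmult: "ismonX x \<Longrightarrow> Wm w \<Longrightarrow> Wm (x * w)"
  unfolding Wm_def by (metis ismonX_mult mult_minus_right)

lemma Wm_mon: "ismonX x \<Longrightarrow> Wm x"
  unfolding Wm_def by blast

lemma piM_ccM: "piM ccM = M 0 ((- xs (Suc 0)) * ys 0) 0 0"
proof -
  have "piM ccM = P1 * P2 - P2 * P1" by (simp add: cc_eq[symmetric] piM_diff piM_mult piM_C1t piM_C2t)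
  also have "\<dots> = M 0 ((- xs (Suc 0)) * ys 0) 0 0" by (simp add: xs_xs[of 0 "Suc 0"])
  finally show ?thesis .
qed

lemma piM_foldl:
  assumes "piM A = M 0 (w * ys 0) 0 0" "Wm w"
  shows "\<exists>w'. Wm w' \<and> piM (foldl (\<lambda>A j. A * CgenT j - CgenT j * A) A js) = M 0 (w' * ys 0) 0 0"
  using assms
proof (induction js arbitrary: A w)
  case Nil then show ?case by auto
next
  case (Cons j js)
  let ?B = "A * CgenT j - CgenT j * A"
  have "\<exists>w'. Wm w' \<and> piM ?B = M 0 (w' * ys 0) 0 0"
  proof (cases "j = 1")
    case True
    then have "piM ?B = M 0 (w * ys 0) 0 0 * P1 - P1 * M 0 (w * ys 0) 0 0"
      using Cons.prems by (simp add: CgenT_def piM_diff piM_mult piM_C1t)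
    also have "\<dots> = M 0 ((- (xs 0 * w)) * ys 0) 0 0" by (simp add: mult.assoc)
    finally show ?thesis using Cons.prems(2) Wm_neg Wm_lmult ismonX_xs by blast
  next
    case False
    then have "piM ?B = M 0 (w * ys 0) 0 0 * P2 - P2 * M 0 (w * ys 0) 0 0"
      using Cons.prems by (simp add: CgenT_def piM_diff piM_mult piM_C2t)
    also have "\<dots> = M 0 ((- (xs (Suc 0) * w)) * ys 0) 0 0" by (simp add: mult.assoc)
    finally show ?thesis using Cons.prems(2) Wm_neg Wm_lmult ismonX_xs by blast
  qed
  then obtain w' where "Wm w'" "piM ?B = M 0 (w' * ys 0) 0 0" by blast
  then show ?case using Cons.IH by simp
qed

lemma piM_lncT: "\<exists>w. Wm w \<and> piM (lncT js) = M 0 (w * ys 0) 0 0"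
  unfolding lncT_def
  by (rule piM_foldl[OF piM_ccM]) (simp add: Wm_neg Wm_mon ismonX_xs)

lemma P1_pow_Suc: "P1 ^ Suc n = M (xs 0 ^ Suc n) (xs 0 ^ n * ys 0) 0 0"
  by (induction n) (simp_all add: M_one mult.assoc)
lemma P2_pow_Suc: "P2 ^ Suc m = M (xs (Suc 0) ^ Suc m) 0 0 0"
  by (induction m) (simp_all add: M_one)
lemma P1_pow_off: "P1 ^ n * M 0 t 0 0 = M 0 (xs 0 ^ n * t) 0 0"
  by (induction n) (simp_all add: M_one mult.assoc)
lemma P2_pow_off: "P2 ^ m * M 0 t 0 0 = M 0 (xs (Suc 0) ^ m * t) 0 0"
  by (induction m) (simp_all add: M_one mult.assoc)
lemma P1_pow_diag: "P1 ^ n * M a 0 0 0 = M (xs 0 ^ n * a) 0 0 0"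
  by (induction n) (simp_all add: M_one mult.assoc)

lemma contra1:
  assumes "1 \<le> m" "((P1 :: 'k::comm_ring_1 R M) ^ n * P2 ^ m) * P1 = P1 * (P1 ^ n * P2 ^ m)"
  shows False
proof -
  obtain m' where m: "m = Suc m'" using assms(1) by (cases m) auto
  have "(P1 :: 'k R M) ^ n * P2 ^ m = M (xs 0 ^ n * xs (Suc 0) ^ m) 0 0 0"
    unfolding m P2_pow_Suc P1_pow_diag ..
  then have "(xs 0 ^ n * xs (Suc 0) ^ m) * ys 0 = (0 :: 'k R)" using assms(2) by simp
  then show False using ismonX_nz ismonX_mult ismonX_pow ismonX_xs by blast
qed

lemma contra2:
  assumes "1 \<le> n" "(P1 :: 'k::comm_ring_1 R M) ^ n * P2 = P2 * P1 ^ n"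
  shows False
proof -
  obtain n' where n: "n = Suc n'" using assms(1) by (cases n) auto
  have "M (xs 0 ^ Suc n') (xs 0 ^ n' * ys 0) 0 0 * P2 = (P2 :: 'k R M) * M (xs 0 ^ Suc n') (xs 0 ^ n' * ys 0) 0 0"
    using assms(2) unfolding n P1_pow_Suc .
  then have "xs (Suc 0) * (xs 0 ^ n' * ys 0) = (0 :: 'k R)" by simp
  then have "(xs (Suc 0) * xs 0 ^ n') * ys 0 = (0 :: 'k R)" by (simp add: mult.assoc)
  then show False using ismonX_nz ismonX_mult ismonX_pow ismonX_xs by blast
qed

lemma contra3:
  assumes "Wm w" "((P1 :: 'k::comm_ring_1 R M) ^ n * (P2 ^ m * M 0 (w * ys 0) 0 0)) * P2 = P2 * (P1 ^ n * (P2 ^ m * M 0 (w * ys 0) 0 0))"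
  shows False
proof -
  have "(P1 :: 'k R M) ^ n * (P2 ^ m * M 0 (w * ys 0) 0 0) = M 0 (xs 0 ^ n * (xs (Suc 0) ^ m * (w * ys 0))) 0 0"
    by (simp add: P1_pow_off P2_pow_off)
  then have "xs (Suc 0) * (xs 0 ^ n * (xs (Suc 0) ^ m * (w * ys 0))) = (0 :: 'k R)" using assms(2) by simp
  then have "(xs (Suc 0) * (xs 0 ^ n * (xs (Suc 0) ^ m * w))) * ys 0 = (0 :: 'k R)" by (simp add: mult.assoc)
  moreover have "Wm (xs (Suc 0) * (xs 0 ^ n * (xs (Suc 0) ^ m * w)))"
    using assms(1) by (intro Wm_lmult ismonX_xs ismonX_pow)
  ultimately show False using Wm_nz by blast
qed


lemma sum0_iff: "sum_list (map snd us) = (0::nat) \<longleftrightarrow> (\<forall>(js, k) \<in> set us. k = 0)"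
  by (induction us) auto

lemma prodT_sum0: "sum_list (map snd us) = 0 \<Longrightarrow> (prodT us :: 'k::comm_ring_1 R M) = 1"
  by (induction us) (auto simp: prodT_def)

lemma prodT_sum1: "sum_list (map snd us) = 1 \<Longrightarrow> \<exists>js. (prodT us :: 'k::comm_ring_1 R M) = lncT js"
proof (induction us)
  case Nil then show ?case by simp
next
  case (Cons u us)
  obtain js k where u: "u = (js, k)" by (cases u)
  have e: "(prodT (u # us) :: 'k R M) = lncT js ^ k * prodT us" by (simp add: prodT_def u)
  have s: "k + sum_list (map snd us) = 1" using Cons.prems u by simp
  show ?case
  proof (cases "k = 0")
    case True
    then have "sum_list (map snd us) = 1" using s by simp
    then obtain js' where "(prodT us :: 'k R M) = lncT js'" using Cons.IH by blast
    then have "(prodT (u # us) :: 'k R M) = lncT js'" using e True by simp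
    then show ?thesis by blast
  next
    case False
    then have k1: "k = 1" and s0: "sum_list (map snd us) = 0" using s by linarith+
    have p0: "(prodT us :: 'k R M) = 1" using prodT_sum0[OF s0] .
    have "(prodT (u # us) :: 'k R M) = lncT js" using e k1 p0 by simp
    then show ?thesis by blast
  qed
qed

lemma central_from_toM:
  fixes f :: "'k::comm_ring_1 mat2"
  assumes f: "f \<in> Falg" and c: "\<And>G. G \<in> FT \<Longrightarrow> toM f * G = G * toM f"
  shows "central_in_F f"
  unfolding central_in_F_def
proof (intro conjI ballI)
  show "f \<in> Falg" by (rule f)
  fix g :: "'k mat2" assume g: "g \<in> Falg"
  have nf: "niceM f" and ng: "niceM g" and tg: "toM g \<in> FT" using Falg_toM f g by auto
  have "toM (mmult f g) = toM (mmult g f)"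
    using toM_mmult[OF nf ng] toM_mmult[OF ng nf] c[OF tg] by simp
  then show "mmult f g = mmult g f"
    by (rule toM_inj[OF niceM_mmult[OF nf ng] niceM_mmult[OF ng nf]])
qed

theorem proposition2:
  fixes n m :: nat and us :: "(nat list \<times> nat) list"
  assumes "infinite (UNIV :: 'k::field set)"
    and "CHAR('k) \<noteq> 2"
    and "\<forall>(js, k) \<in> set us. set js \<subseteq> {1, 2}"
  shows "central_in_F (fmono n m us :: 'k mat2) \<longleftrightarrow>
           (sum_list (map snd us) \<ge> 2 \<or> (n = 0 \<and> m = 0 \<and> (\<forall>(js, k) \<in> set us. k = 0)))"
proof -
  let ?f = "fmono n m us :: 'k mat2"
  have fF: "?f \<in> Falg" and tf: "toM ?f = C1t ^ n * (C2t ^ m * prodT us)"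
    using fmono_Falg by auto
  have nf: "niceM ?f" using Falg_toM[OF fF] by simp
  show ?thesis
  proof
    assume cen: "central_in_F ?f"
    have c1: "mmult ?f C1 = mmult C1 ?f" and c2: "mmult ?f C2 = mmult C1 ?f \<or> mmult ?f C2 = mmult C2 ?f"
      using cen Falg.gen1 Falg.gen2 unfolding central_in_F_def by auto
    have "mmult ?f C2 = mmult C2 ?f" using cen Falg.gen2 unfolding central_in_F_def by auto
    then have e2: "toM ?f * C2t = C2t * toM ?f"
      using toM_mmult[OF nf niceM_C2] toM_mmult[OF niceM_C2 nf] toM_C2 by metis
    have e1: "toM ?f * C1t = C1t * toM ?f"
      using c1 toM_mmult[OF nf niceM_C1] toM_mmult[OF niceM_C1 nf] toM_C1 by metis
    let ?F = "piM (toM ?f)"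
    have F: "?F = P1 ^ n * (P2 ^ m * piM (prodT us))"
      using tf by (simp add: piM_mult piM_pow piM_C1t piM_C2t)
    have p1: "?F * P1 = P1 * ?F" using arg_cong[OF e1, of piM] by (simp add: piM_mult piM_C1t)
    have p2: "?F * P2 = P2 * ?F" using arg_cong[OF e2, of piM] by (simp add: piM_mult piM_C2t)
    show "sum_list (map snd us) \<ge> 2 \<or> (n = 0 \<and> m = 0 \<and> (\<forall>(js, k) \<in> set us. k = 0))"
    proof (rule ccontr)
      assume neg: "\<not> ?thesis"
      then have s: "sum_list (map snd us) \<le> 1" by simp
      show False
      proof (cases "sum_list (map snd us) = 0")
        case True
        then have pr: "piM (prodT us :: 'k R M) = 1" by (simp add: prodT_sum0 piM_one)
        have nm: "n \<noteq> 0 \<or> m \<noteq> 0" using neg True sum0_iff[of us] by auto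
        show False
        proof (cases "m = 0")
          case False
          then show False using contra1[of m n] p1 F pr by (simp add: mult.assoc)
        next
          case True
          then have "1 \<le> n" using nm by simp
          then show False using contra2[of n] p2 F pr True by simp
        qed
      next
        case False
        then have "sum_list (map snd us) = 1" using s by linarith
        then obtain js where "(prodT us :: 'k R M) = lncT js" using prodT_sum1 by blast
        moreover obtain w where "Wm w" "piM (lncT js :: 'k R M) = M 0 (w * ys 0) 0 0"
          using piM_lncT by blast
        ultimately show False using contra3[of w n m] p2 F by simp
      qed
    qed
  next
    assume rhs: "sum_list (map snd us) \<ge> 2 \<or> (n = 0 \<and> m = 0 \<and> (\<forall>(js, k) \<in> set us. k = 0))"
    show "central_in_F ?f"
    proof (rule central_from_toM[OF fF])
      fix G :: "'k R M" assume G: "G \<in> FT"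
      show "toM ?f * G = G * toM ?f"
      proof (cases "sum_list (map snd us) \<ge> 2")
        case True
        then have "(prodT us :: 'k R M) \<in> I2" using prodT_levels by blast
        then have "C1t ^ n * (C2t ^ m * (prodT us :: 'k R M)) \<in> I2"
          by (intro I2_lmult FT_pow FT.gen1 FT.gen2)
        then show ?thesis using I2_central G tf by metis
      next
        case False
        then have "n = 0" "m = 0" "sum_list (map snd us) = 0" using rhs sum0_iff[of us] by auto
        then have "toM ?f = 1" using tf prodT_sum0[of us] by simp
        then show ?thesis by simp
      qed
    qed
  qed
qed


end
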